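(* For every $k>0$ there exists $N$ such that for every integer $n\ge2$ and every prime power $q$, the number of polynomials $P\in\mathcal L_n(q)$ which have more than $N\log n$ irreducible factors in $\mathbb F_q[x]$ (counted with multiplicity) is at most $n^{-k}|\mathcal L_n(q)|$.
   Context: $\mathcal L_n(q)$ denotes the set of monic polynomials $P(x)\in\mathbb F_q[x]$ of degree $n$ with $P(0)=(-1)^n$. *)

theory Defs
  imports "HOL-Algebra.Polynomial_Divisibility" Complex_Main
begin

text \<open>Polynomials over a field R (HOL-Algebra list representation, leading coefficient first).
  L_set R n: monic polynomials of degree n with constant term (-1)^n.\<close>

definition L_set :: "('a, 'b) ring_scheme \<Rightarrow> nat \<Rightarrow> 'a list set" where
  "L_set R n = {P \<in> carrier (poly_ring R). P \<noteq> [] \<and> degree P = n \<and>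
       lead_coeff P = \<one>\<^bsub>R\<^esub> \<and>
       ring.eval R P \<zero>\<^bsub>R\<^esub> = (\<ominus>\<^bsub>R\<^esub> \<one>\<^bsub>R\<^esub>) [^]\<^bsub>R\<^esub> n}"

definition num_irred_factors :: "('a, 'b) ring_scheme \<Rightarrow> 'a list \<Rightarrow> nat" where
  "num_irred_factors R P = (THE m. \<exists>fs. length fs = m \<and> set fs \<subseteq> carrier (poly_ring R) \<and>
       (\<forall>f \<in> set fs. pirreducible\<^bsub>R\<^esub> (carrier R) f) \<and>
       foldr (\<otimes>\<^bsub>poly_ring R\<^esub>) fs \<one>\<^bsub>poly_ring R\<^esub> = P)"

end

theory Submission
  imports Defs
begin


definition degM :: "('p \<Rightarrow> nat) \<Rightarrow> 'p multiset \<Rightarrow> nat" where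
  "degM dg M = sum_mset (image_mset dg M)"

lemma degM_add[simp]: "degM dg (M + N) = degM dg M + degM dg N"
  by (simp add: degM_def)
lemma degM_empty[simp]: "degM dg {#} = 0"
  by (simp add: degM_def)
lemma degM_single[simp]: "degM dg {#p#} = dg p"
  by (simp add: degM_def)
lemma degM_rep[simp]: "degM dg (replicate_mset a p) = a * dg p"
  by (simp add: degM_def)

lemma degM_count: "degM dg M = (\<Sum>x\<in>set_mset M. count M x * dg x)"
proof (induction M)
  case empty then show ?case by simp
next
  case (add x M)
  show ?case
  proof (cases "x \<in> set_mset M")
    case True
    have "(\<Sum>y\<in>set_mset (add_mset x M). count (add_mset x M) y * dg y)
        = (\<Sum>y\<in>set_mset M. count M y * dg y + (if y = x then dg y else 0))"
      using True by (intro sum.cong) (auto simp: insert_absorb)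
    also have "\<dots> = (\<Sum>y\<in>set_mset M. count M y * dg y) + dg x"
      using True by (simp add: sum.distrib)
    finally show ?thesis using add by (simp add: degM_def)
  next
    case False
    have "(\<Sum>y\<in>set_mset (add_mset x M). count (add_mset x M) y * dg y)
        = dg x + (\<Sum>y\<in>set_mset M. count (add_mset x M) y * dg y)"
      using False by (simp add: not_in_iff)
    also have "(\<Sum>y\<in>set_mset M. count (add_mset x M) y * dg y) = (\<Sum>y\<in>set_mset M. count M y * dg y)"
      using False by (intro sum.cong) auto
    finally show ?thesis using add by (simp add: degM_def)
  qed
qed


lemma size_le_degM: "(\<And>p. p \<in># M \<Longrightarrow> 1 \<le> dg p) \<Longrightarrow> size M \<le> degM dg M"
proof (induction M)
  case empty then show ?case by simp
next
  case (add x M)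
  then have "size M \<le> degM dg M" by auto
  moreover have "1 \<le> dg x" using add.prems by auto
  ultimately show ?case by (simp add: degM_def)
qed

fun Sb :: "real \<Rightarrow> real \<Rightarrow> nat \<Rightarrow> real" where
  "Sb C K 0 = 0"
| "Sb C K (Suc j) = Sb C K j + (C + K * Sb C K j / real (Suc j))"

definition beta :: "real \<Rightarrow> real \<Rightarrow> nat \<Rightarrow> real" where
  "beta C K j = C + K * Sb C K (j - 1) / real j"

lemma Sb_Suc_beta: "Sb C K (Suc j) = Sb C K j + beta C K (Suc j)"
  by (simp add: beta_def)

lemma Sb_sum: "Sb C K j = (\<Sum>i\<in>{1..j}. beta C K i)"
  by (induction j) (simp, simp only: Sb_Suc_beta, simp)

lemma Sb_nonneg: "0 \<le> C \<Longrightarrow> 0 \<le> K \<Longrightarrow> 0 \<le> Sb C K j"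
  by (induction j) auto

lemma beta_nonneg: "0 \<le> C \<Longrightarrow> 0 \<le> K \<Longrightarrow> 0 \<le> beta C K j"
  unfolding beta_def using Sb_nonneg by auto

lemma Sb_mono: "0 \<le> C \<Longrightarrow> 0 \<le> K \<Longrightarrow> i \<le> j \<Longrightarrow> Sb C K i \<le> Sb C K j"
proof (induction j)
  case 0 then show ?case by simp
next
  case (Suc j)
  then show ?case
  proof (cases "i = Suc j")
    case False
    then have "Sb C K i \<le> Sb C K j" using Suc by auto
    also have "\<dots> \<le> Sb C K (Suc j)" using Sb_Suc_beta[of C K j] beta_nonneg[OF Suc.prems(1,2)] by simp
    finally show ?thesis .
  qed simp
qed

lemma beta_le_Sb: "0 \<le> C \<Longrightarrow> 0 \<le> K \<Longrightarrow> 1 \<le> i \<Longrightarrow> i \<le> m \<Longrightarrow> beta C K i \<le> Sb C K m"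
proof -
  assume a: "0 \<le> C" "0 \<le> K" "1 \<le> i" "i \<le> m"
  obtain i' where i': "i = Suc i'" using a(3) by (cases i) auto
  have "beta C K i \<le> Sb C K i" using Sb_Suc_beta[of C K i'] Sb_nonneg[OF a(1,2), of i'] i' by simp
  also have "\<dots> \<le> Sb C K m" using Sb_mono a by auto
  finally show ?thesis .
qed

locale fc =
  fixes Pr :: "'p set" and dg :: "'p \<Rightarrow> nat" and val :: "'p multiset \<Rightarrow> 'v"
    and T :: "'v set" and q :: nat
  assumes dg_pos: "p \<in> Pr \<Longrightarrow> 1 \<le> dg p"
  and card_A: "card {M. set_mset M \<subseteq> Pr \<and> degM dg M = j} = q ^ j"
  and cnt: "1 \<le> j \<Longrightarrow> t \<in> T \<Longrightarrow>
     card {M. set_mset M \<subseteq> Pr \<and> degM dg M = j \<and> val M = t} \<le> q ^ (j - 1)"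
  and hval: "p \<in> Pr \<Longrightarrow> 1 \<le> a \<Longrightarrow> t \<in> T \<Longrightarrow>
     \<exists>s\<in>T. \<forall>M'. set_mset M' \<subseteq> Pr \<longrightarrow> val (M' + replicate_mset a p) = t \<longrightarrow> val M' = s"
  and q2: "2 \<le> q"
begin

definition A :: "nat \<Rightarrow> 'p multiset set" where
  "A j = {M. set_mset M \<subseteq> Pr \<and> degM dg M = j}"

definition Pairs :: "nat \<Rightarrow> ('p \<times> nat) set" where
  "Pairs j = {(p,a). p \<in> Pr \<and> 1 \<le> a \<and> a * dg p \<le> j}"

lemma finA: "finite (A j)"
proof -
  have "card (A j) > 0" using card_A[of j] q2 unfolding A_def by simp
  then show ?thesis by (rule card_ge_0_finite)
qed

lemma A0: "A 0 = {{#}}"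
proof -
  have "M = {#}" if "M \<in> A 0" for M
  proof -
    have "size M \<le> degM dg M" using that dg_pos by (intro size_le_degM) (auto simp: A_def)
    then show ?thesis using that by (auto simp: A_def)
  qed
  then show ?thesis by (auto simp: A_def)
qed

lemma finPr: "finite {p\<in>Pr. dg p \<le> j}"
proof -
  have "(\<lambda>p. {#p#}) ` {p\<in>Pr. dg p \<le> j} \<subseteq> (\<Union>i\<le>j. A i)"
    by (auto simp: A_def)
  then have "finite ((\<lambda>p. {#p#}) ` {p\<in>Pr. dg p \<le> j})"
    using finA by (meson finite_UN_I finite_atMost finite_subset)
  then show ?thesis by (rule finite_imageD) (auto simp: inj_on_def)
qed

lemma finPairs: "finite (Pairs j)"
proof -
  have "Pairs j \<subseteq> {p\<in>Pr. dg p \<le> j} \<times> {1..j}"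
  proof
    fix x assume "x \<in> Pairs j"
    then obtain p a where x: "x = (p,a)" "p \<in> Pr" "1 \<le> a" "a * dg p \<le> j"
      by (auto simp: Pairs_def)
    have "1 \<le> dg p" using dg_pos x by auto
    then have "a \<le> a * dg p" "dg p \<le> a * dg p" using x by auto
    then have "a \<le> j" "dg p \<le> j" using x by linarith+
    then show "x \<in> {p\<in>Pr. dg p \<le> j} \<times> {1..j}" using x by auto
  qed
  moreover have "finite ({p\<in>Pr. dg p \<le> j} \<times> {1..j})" using finPr by auto
  ultimately show ?thesis by (rule finite_subset)
qed

lemma decomp:
  fixes f :: "'p multiset \<Rightarrow> real"
  shows "real j * (\<Sum>M\<in>A j. f M) =
    (\<Sum>(p,a)\<in>Pairs j. real (dg p) * (\<Sum>M'\<in>A (j - a * dg p). f (M' + replicate_mset a p)))"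
proof -
  define Sg where "Sg M = Sigma (set_mset M) (\<lambda>p. {1..count M p})" for M :: "'p multiset"
  have finSg: "finite (Sg M)" for M by (auto simp: Sg_def)
  have degsum: "real (degM dg M) = (\<Sum>(p,a)\<in>Sg M. real (dg p))" for M
  proof -
    have "(\<Sum>(p,a)\<in>Sg M. real (dg p)) = (\<Sum>p\<in>set_mset M. \<Sum>a\<in>{1..count M p}. real (dg p))"
      unfolding Sg_def by (subst sum.Sigma) auto
    also have "\<dots> = (\<Sum>p\<in>set_mset M. real (count M p * dg p))" by simp
    also have "\<dots> = real (degM dg M)" by (simp add: degM_count)
    finally show ?thesis by simp
  qed
  have "real j * (\<Sum>M\<in>A j. f M) = (\<Sum>M\<in>A j. real (degM dg M) * f M)"
    by (simp add: sum_distrib_left A_def)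
  also have "\<dots> = (\<Sum>M\<in>A j. \<Sum>(p,a)\<in>Sg M. real (dg p) * f M)"
    by (simp add: degsum sum_distrib_right case_prod_beta)
  also have "\<dots> = (\<Sum>(M,pa)\<in>Sigma (A j) Sg. real (dg (fst pa)) * f M)"
    by (subst sum.Sigma) (auto simp: finA finSg case_prod_beta)
  also have "\<dots> = (\<Sum>(pa,M')\<in>Sigma (Pairs j) (\<lambda>(p,a). A (j - a * dg p)).
        real (dg (fst pa)) * f (M' + replicate_mset (snd pa) (fst pa)))"
  proof (rule sum.reindex_bij_witness[where i = "\<lambda>(pa,M'). (M' + replicate_mset (snd pa) (fst pa), pa)"
        and j = "\<lambda>(M,pa). (pa, M - replicate_mset (snd pa) (fst pa))"])
    fix x assume x: "x \<in> Sigma (A j) Sg"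
    obtain M p a where xe: "x = (M,(p,a))" by (metis prod.collapse)
    have pM: "p \<in># M" and a1: "1 \<le> a" and ac: "a \<le> count M p" and MA: "M \<in> A j"
      using x xe by (auto simp: Sg_def)
    have sub: "replicate_mset a p \<subseteq># M" using ac by (simp add: count_le_replicate_mset_subset_eq)
    then have Meq: "M - replicate_mset a p + replicate_mset a p = M" by simp
    show "(\<lambda>(pa,M'). (M' + replicate_mset (snd pa) (fst pa), pa))
        ((\<lambda>(M,pa). (pa, M - replicate_mset (snd pa) (fst pa))) x) = x"
      using xe Meq by simp
    have dM: "degM dg M = degM dg (M - replicate_mset a p) + a * dg p"
      using Meq by (metis degM_add degM_rep)
    have "set_mset (M - replicate_mset a p) \<subseteq> set_mset M" by (meson in_diffD subsetI)
    then show "(\<lambda>(M,pa). (pa, M - replicate_mset (snd pa) (fst pa))) x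
        \<in> Sigma (Pairs j) (\<lambda>(p,a). A (j - a * dg p))"
      using xe MA pM a1 dM by (auto simp: A_def Pairs_def)
    show "(\<lambda>(pa,M'). real (dg (fst pa)) * f (M' + replicate_mset (snd pa) (fst pa)))
        ((\<lambda>(M,pa). (pa, M - replicate_mset (snd pa) (fst pa))) x) =
        (\<lambda>(M,pa). real (dg (fst pa)) * f M) x"
      using xe Meq by simp
  next
    fix y assume y: "y \<in> Sigma (Pairs j) (\<lambda>(p,a). A (j - a * dg p))"
    obtain M' p a where ye: "y = ((p,a),M')" by (metis prod.collapse)
    have pP: "p \<in> Pr" and a1: "1 \<le> a" and le: "a * dg p \<le> j" and MA: "M' \<in> A (j - a * dg p)"
      using y ye by (auto simp: Pairs_def)
    show "(\<lambda>(M,pa). (pa, M - replicate_mset (snd pa) (fst pa)))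
        ((\<lambda>(pa,M'). (M' + replicate_mset (snd pa) (fst pa), pa)) y) = y"
      using ye by simp
    have "count (M' + replicate_mset a p) p \<ge> a" by simp
    then show "(\<lambda>(pa,M'). (M' + replicate_mset (snd pa) (fst pa), pa)) y \<in> Sigma (A j) Sg"
      using ye pP a1 le MA by (auto simp: A_def Sg_def)
  qed
  also have "\<dots> = (\<Sum>pa\<in>Pairs j. \<Sum>M'\<in>(\<lambda>(p,a). A (j - a * dg p)) pa.
        real (dg (fst pa)) * f (M' + replicate_mset (snd pa) (fst pa)))"
    by (rule sum.Sigma[symmetric]) (auto simp: finPairs finA)
  also have "\<dots> = (\<Sum>(p,a)\<in>Pairs j. \<Sum>M'\<in>A (j - a * dg p). real (dg p) * f (M' + replicate_mset a p))"
    by (simp add: case_prod_beta)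
  also have "\<dots> = (\<Sum>(p,a)\<in>Pairs j. real (dg p) * (\<Sum>M'\<in>A (j - a * dg p). f (M' + replicate_mset a p)))"
    by (simp add: sum_distrib_left)
  finally show ?thesis .
qed

lemma cardA_real: "real (card (A j)) = real q ^ j"
  using card_A[of j] by (simp add: A_def)

lemma Ibound: "(\<Sum>p\<in>{p\<in>Pr. dg p = j}. real (dg p)) \<le> real q ^ j"
proof (cases "j = 0")
  case True
  then have "{p\<in>Pr. dg p = j} = {}" using dg_pos by fastforce
  then show ?thesis by (simp only: sum.empty) simp
next
  case False
  define Eq where "Eq = {x\<in>Pairs j. snd x * dg (fst x) = j}"
  define h where "h = (\<lambda>j (x::'p\<times>nat). real (dg (fst x)) * real q ^ (j - snd x * dg (fst x)))"
  have H: "real j * real q ^ j = (\<Sum>x\<in>Pairs j. h j x)" for j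
    using decomp[of j "\<lambda>_. 1"] by (simp add: cardA_real h_def case_prod_beta)
  have split1: "Pairs j = Pairs (j - 1) \<union> Eq"
    using False by (auto simp: Pairs_def Eq_def)
  have split2: "Pairs (j - 1) \<inter> Eq = {}"
  proof -
    have "x \<notin> Pairs (j - 1)" if "x \<in> Eq" for x
    proof -
      obtain p a where x: "x = (p,a)" by (cases x)
      have "a * dg p = j" using that x by (auto simp: Eq_def)
      show ?thesis
      proof
        assume "x \<in> Pairs (j - 1)"
        then have "a * dg p \<le> j - 1" using x by (simp add: Pairs_def)
        then show False using \<open>a * dg p = j\<close> False by linarith
      qed
    qed
    then show ?thesis by blast
  qed
  note split = split1 split2
  have finE: "finite Eq" using finPairs[of j] by (auto simp: Eq_def)
  have "(\<Sum>x\<in>Pairs (j-1). h j x) = (\<Sum>x\<in>Pairs (j-1). real q * h (j - 1) x)"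
  proof (intro sum.cong refl)
    fix x assume "x \<in> Pairs (j - 1)"
    then have "snd x * dg (fst x) \<le> j - 1" by (auto simp: Pairs_def)
    then have "j - snd x * dg (fst x) = Suc (j - 1 - snd x * dg (fst x))" using False by linarith
    then show "h j x = real q * h (j - 1) x" by (simp add: h_def)
  qed
  also have "\<dots> = real q * (real (j - 1) * real q ^ (j - 1))"
    by (simp add: H sum_distrib_left)
  finally have P1: "(\<Sum>x\<in>Pairs (j-1). h j x) = real (j - 1) * real q ^ j"
    using False by (cases j) (auto simp: algebra_simps)
  have "real j * real q ^ j = (\<Sum>x\<in>Pairs (j-1). h j x) + (\<Sum>x\<in>Eq. h j x)"
    using H[of j] split finE finPairs by (simp add: sum.union_disjoint)
  also have "(\<Sum>x\<in>Eq. h j x) = (\<Sum>x\<in>Eq. real (dg (fst x)))"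
    by (intro sum.cong) (auto simp: h_def Eq_def)
  finally have EqS: "(\<Sum>x\<in>Eq. real (dg (fst x))) = real q ^ j"
    using P1 False by (cases j) (auto simp: algebra_simps)
  have "(\<Sum>p\<in>{p\<in>Pr. dg p = j}. real (dg p)) = (\<Sum>x\<in>(\<lambda>p. (p,1::nat)) ` {p\<in>Pr. dg p = j}. real (dg (fst x)))"
    by (subst sum.reindex) (auto simp: inj_on_def)
  also have "\<dots> \<le> (\<Sum>x\<in>Eq. real (dg (fst x)))"
    by (rule sum_mono2[OF finE]) (auto simp: Eq_def Pairs_def)
  finally show ?thesis using EqS by simp
qed

lemma num_aux:
  assumes z: "1 \<le> z" and a: "2 \<le> a" "a \<le> i"
  shows "z ^ a * real q ^ (i div a) * sqrt 2 ^ i \<le> 2 * real q ^ (i - 1) * z ^ i"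
proof -
  define d where "d = i div a"
  have "d * 2 \<le> d * a" using a by simp
  also have "d * a \<le> i" unfolding d_def using div_mult_mod_eq[of i a] by linarith
  finally have d2: "2 * d \<le> i" by simp
  have i1: "d \<le> i - 1" using d2 a by linarith
  have za: "z ^ a \<le> z ^ i" using z a by (intro power_increasing) auto
  have "sqrt 2 ^ i \<le> sqrt 2 ^ (2 * (i - d))" using d2 by (intro power_increasing) auto
  also have "\<dots> = 2 ^ (i - d)" by (simp add: power_mult)
  also have "\<dots> = 2 * 2 ^ (i - 1 - d)"
  proof -
    have "i - d = Suc (i - 1 - d)" using i1 a by linarith
    then show ?thesis by simp
  qed
  also have "\<dots> \<le> 2 * real q ^ (i - 1 - d)" using q2 by (intro mult_left_mono power_mono) auto
  finally have s: "sqrt 2 ^ i \<le> 2 * real q ^ (i - 1 - d)" .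
  have "real q ^ d * real q ^ (i - 1 - d) = real q ^ (d + (i - 1 - d))" by (simp add: power_add)
  also have "d + (i - 1 - d) = i - 1" using i1 by linarith
  finally have "real q ^ d * real q ^ (i - 1 - d) = real q ^ (i - 1)" .
  moreover have "real q ^ d * sqrt 2 ^ i \<le> real q ^ d * (2 * real q ^ (i - 1 - d))"
    using s by (intro mult_left_mono) auto
  ultimately have qd: "real q ^ d * sqrt 2 ^ i \<le> 2 * real q ^ (i - 1)" by (simp add: algebra_simps)
  have "z ^ a * (real q ^ d * sqrt 2 ^ i) \<le> z ^ i * (2 * real q ^ (i - 1))"
    using mult_mono[OF za qd] z by auto
  then show ?thesis unfolding d_def by (simp add: algebra_simps)
qed

lemma Wbound:
  assumes z: "1 \<le> z" and i: "1 \<le> i"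
  shows "(\<Sum>x\<in>{x\<in>Pairs i. snd x * dg (fst x) = i}. real (dg (fst x)) * z ^ snd x)
     \<le> z * real q ^ i + 2 * real q ^ (i - 1) * (real i * (z / sqrt 2) ^ i)"
   and "(\<Sum>x\<in>{x\<in>Pairs i. snd x * dg (fst x) = i \<and> 2 \<le> snd x}. real (dg (fst x)) * z ^ snd x)
     \<le> 2 * real q ^ (i - 1) * (real i * (z / sqrt 2) ^ i)"
proof -
  define Eq where "Eq = {x\<in>Pairs i. snd x * dg (fst x) = i}"
  define E1 where "E1 = {x\<in>Eq. snd x = 1}"
  define E2 where "E2 = {x\<in>Eq. 2 \<le> snd x}"
  have finE: "finite Eq" using finPairs[of i] by (auto simp: Eq_def)
  have EE: "Eq = E1 \<union> E2" "E1 \<inter> E2 = {}"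
    by (auto simp: E1_def E2_def Eq_def Pairs_def)
  have fin12: "finite E1" "finite E2" using finE by (auto simp: E1_def E2_def)
  let ?g = "\<lambda>x. real (dg (fst x)) * z ^ snd x"
  have S: "sum ?g Eq = sum ?g E1 + sum ?g E2"
    using EE fin12 by (simp add: sum.union_disjoint)
  have E1eq: "E1 = (\<lambda>p. (p,1::nat)) ` {p\<in>Pr. dg p = i}"
    by (auto simp: E1_def Eq_def Pairs_def)
  have "sum ?g E1 = (\<Sum>p\<in>{p\<in>Pr. dg p = i}. real (dg p) * z)"
    unfolding E1eq by (subst sum.reindex) (auto simp: inj_on_def)
  also have "\<dots> = z * (\<Sum>p\<in>{p\<in>Pr. dg p = i}. real (dg p))"
    by (simp add: sum_distrib_left mult.commute)
  also have "\<dots> \<le> z * real q ^ i" using Ibound[of i] z by (intro mult_left_mono) auto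
  finally have B1: "sum ?g E1 \<le> z * real q ^ i" .
  define SS where "SS = Sigma {2..i} (\<lambda>a. {p\<in>Pr. a * dg p = i})"
  have E2eq: "E2 = prod.swap ` SS"
  proof
    show "E2 \<subseteq> prod.swap ` SS"
    proof
      fix x assume x: "x \<in> E2"
      obtain p a where xe: "x = (p,a)" by (cases x)
      have "p \<in> Pr" "2 \<le> a" "a * dg p = i" using x xe by (auto simp: E2_def Eq_def Pairs_def)
      moreover have "1 \<le> dg p" using dg_pos \<open>p \<in> Pr\<close> by auto
      ultimately have "a \<le> i" by (metis mult.right_neutral mult_le_mono2)
      then have "(a,p) \<in> SS" using \<open>p \<in> Pr\<close> \<open>2 \<le> a\<close> \<open>a * dg p = i\<close> by (auto simp: SS_def)
      then show "x \<in> prod.swap ` SS" using xe by (auto intro: image_eqI[of _ _ "(a,p)"])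
    qed
    show "prod.swap ` SS \<subseteq> E2"
      by (auto simp: SS_def E2_def Eq_def Pairs_def)
  qed
  have "sum ?g E2 = (\<Sum>y\<in>SS. real (dg (snd y)) * z ^ fst y)"
    unfolding E2eq by (subst sum.reindex) (auto simp: inj_on_def)
  also have "\<dots> = (\<Sum>a\<in>{2..i}. \<Sum>p\<in>{p\<in>Pr. a * dg p = i}. real (dg p) * z ^ a)"
    unfolding SS_def
  proof (subst sum.Sigma)
    show "finite {2..i}" by simp
    show "\<forall>a\<in>{2..i}. finite {p \<in> Pr. a * dg p = i}"
    proof
      fix a assume "a \<in> {2..i}"
      have "{p \<in> Pr. a * dg p = i} \<subseteq> {p\<in>Pr. dg p \<le> i}"
        using \<open>a \<in> {2..i}\<close> by auto
      then show "finite {p \<in> Pr. a * dg p = i}" using finPr by (rule finite_subset)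
    qed
  qed (simp add: case_prod_beta)
  also have "\<dots> \<le> (\<Sum>a\<in>{2..i}. 2 * real q ^ (i - 1) * z ^ i / sqrt 2 ^ i)"
  proof (rule sum_mono)
    fix a assume a: "a \<in> {2..i}"
    have sub: "{p\<in>Pr. a * dg p = i} \<subseteq> {p\<in>Pr. dg p = i div a}" using a by auto
    have fin: "finite {p\<in>Pr. dg p = i div a}"
      using finPr[of "i div a"] by (rule finite_subset[rotated]) auto
    have "(\<Sum>p\<in>{p\<in>Pr. a * dg p = i}. real (dg p) * z ^ a)
        = z ^ a * (\<Sum>p\<in>{p\<in>Pr. a * dg p = i}. real (dg p))"
      by (simp add: sum_distrib_left mult.commute)
    also have "\<dots> \<le> z ^ a * (\<Sum>p\<in>{p\<in>Pr. dg p = i div a}. real (dg p))"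
      using z by (intro mult_left_mono sum_mono2[OF fin sub]) auto
    also have "\<dots> \<le> z ^ a * real q ^ (i div a)"
      using z by (intro mult_left_mono Ibound) auto
    also have "\<dots> \<le> 2 * real q ^ (i - 1) * z ^ i / sqrt 2 ^ i"
      using num_aux[OF z, of a i] a by (simp add: pos_le_divide_eq)
    finally show "(\<Sum>p\<in>{p\<in>Pr. a * dg p = i}. real (dg p) * z ^ a)
        \<le> 2 * real q ^ (i - 1) * z ^ i / sqrt 2 ^ i" .
  qed
  also have "\<dots> = real (i - 1) * (2 * real q ^ (i - 1) * z ^ i / sqrt 2 ^ i)" by simp
  also have "\<dots> \<le> real i * (2 * real q ^ (i - 1) * z ^ i / sqrt 2 ^ i)"
    using z by (intro mult_right_mono) auto
  also have "\<dots> = 2 * real q ^ (i - 1) * (real i * (z / sqrt 2) ^ i)"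
    by (simp add: power_divide)
  finally have B2: "sum ?g E2 \<le> 2 * real q ^ (i - 1) * (real i * (z / sqrt 2) ^ i)" .
  show "(\<Sum>x\<in>{x\<in>Pairs i. snd x * dg (fst x) = i}. real (dg (fst x)) * z ^ snd x)
     \<le> z * real q ^ i + 2 * real q ^ (i - 1) * (real i * (z / sqrt 2) ^ i)"
    using S B1 B2 unfolding Eq_def by linarith
  have "E2 = {x\<in>Pairs i. snd x * dg (fst x) = i \<and> 2 \<le> snd x}" by (auto simp: E2_def Eq_def)
  then show "(\<Sum>x\<in>{x\<in>Pairs i. snd x * dg (fst x) = i \<and> 2 \<le> snd x}. real (dg (fst x)) * z ^ snd x)
     \<le> 2 * real q ^ (i - 1) * (real i * (z / sqrt 2) ^ i)" using B2 by simp
qed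

lemma G0: "(\<Sum>M\<in>{M\<in>A 0. val M = s}. (z::real) ^ size M) \<le> 1"
proof -
  have "{M\<in>A 0. val M = s} \<subseteq> {{#}}" using A0 by auto
  then have "{M\<in>A 0. val M = s} = {} \<or> {M\<in>A 0. val M = s} = {{#}}" by auto
  then show ?thesis
  proof (elim disjE)
    assume "{M\<in>A 0. val M = s} = {}" then show ?thesis by (metis sum.empty zero_le_one)
  qed simp
qed

lemma main_bound:
  assumes z: "1 \<le> z" and E0: "0 \<le> E"
    and hE: "\<And>J. (\<Sum>i\<in>{1..J}. real i * (z / sqrt 2) ^ i) \<le> E"
  shows "1 \<le> j \<Longrightarrow> t \<in> T \<Longrightarrow> (\<Sum>M\<in>{M\<in>A j. val M = t}. z ^ size M)
           \<le> real q ^ (j - 1) * beta (z + 2 * E) (z + E) j"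
proof (induction j arbitrary: t rule: less_induct)
  case (less j)
  define C where "C = z + 2 * E"
  define K where "K = z + E"
  have C0: "0 \<le> C" and K0: "0 \<le> K" using z E0 by (auto simp: C_def K_def)
  define eps where "eps i = real i * (z / sqrt 2) ^ i" for i :: nat
  have eps_nn: "0 \<le> eps i" for i using z by (auto simp: eps_def)
  have eps_le: "eps i \<le> E" if "1 \<le> i" for i
  proof -
    have "eps i \<le> (\<Sum>k\<in>{1..i}. eps k)" using that eps_nn by (intro member_le_sum) auto
    then show ?thesis using hE[of i] by (simp add: eps_def)
  qed
  have jpos: "1 \<le> j" by fact
  have tT: "t \<in> T" by fact
  define f where "f M = (if val M = t then z ^ size M else 0)" for M
  have f_nn: "0 \<le> f M" for M using z by (auto simp: f_def)
  have Gf: "(\<Sum>M\<in>A j. f M) = (\<Sum>M\<in>{M\<in>A j. val M = t}. z ^ size M)"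
    by (simp add: f_def sum.inter_filter[OF finA])
  define Bd where "Bd x = (if snd x * dg (fst x) < j
      then real (dg (fst x)) * z ^ snd x * (real q ^ (j - snd x * dg (fst x) - 1) * beta C K (j - snd x * dg (fst x)))
      else if snd x = 1 then real (dg (fst x)) * z * (if val {#fst x#} = t then 1 else 0)
      else real (dg (fst x)) * z ^ snd x)" for x
  have termle: "real (dg (fst x)) * (\<Sum>M'\<in>A (j - snd x * dg (fst x)). f (M' + replicate_mset (snd x) (fst x))) \<le> Bd x"
    if x: "x \<in> Pairs j" for x
  proof -
    obtain p a where xe: "x = (p,a)" by (cases x)
    have pP: "p \<in> Pr" and a1: "1 \<le> a" and le: "a * dg p \<le> j" using x xe by (auto simp: Pairs_def)
    show ?thesis
    proof (cases "a * dg p < j")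
      case True
      define m where "m = j - a * dg p"
      have m1: "1 \<le> m" "m < j" using True a1 pP dg_pos unfolding m_def
        by (auto simp: Suc_le_eq)
      obtain s where sT: "s \<in> T" and hs: "\<forall>M'. set_mset M' \<subseteq> Pr \<longrightarrow> val (M' + replicate_mset a p) = t \<longrightarrow> val M' = s"
        using hval[OF pP a1 tT] by blast
      have "(\<Sum>M'\<in>A m. f (M' + replicate_mset a p)) \<le> (\<Sum>M'\<in>A m. z ^ a * (if val M' = s then z ^ size M' else 0))"
      proof (rule sum_mono)
        fix M' assume M': "M' \<in> A m"
        show "f (M' + replicate_mset a p) \<le> z ^ a * (if val M' = s then z ^ size M' else 0)"
        proof (cases "val (M' + replicate_mset a p) = t")
          case True
          then have "val M' = s" using hs M' by (auto simp: A_def)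
          then show ?thesis using True by (simp add: f_def power_add)
        next
          case False then show ?thesis using z by (simp add: f_def)
        qed
      qed
      also have "\<dots> = z ^ a * (\<Sum>M\<in>{M\<in>A m. val M = s}. z ^ size M)"
        by (simp add: sum_distrib_left sum.inter_filter[OF finA] if_distrib cong: if_cong)
      also have "\<dots> \<le> z ^ a * (real q ^ (m - 1) * beta (z + 2 * E) (z + E) m)"
        using less.IH[OF m1(2) m1(1) sT] z by (intro mult_left_mono) auto
      finally have "(\<Sum>M'\<in>A m. f (M' + replicate_mset a p)) \<le> z ^ a * (real q ^ (m - 1) * beta C K m)"
        by (simp add: C_def K_def)
      then have "real (dg p) * (\<Sum>M'\<in>A m. f (M' + replicate_mset a p))
          \<le> real (dg p) * (z ^ a * (real q ^ (m - 1) * beta C K m))"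
        by (intro mult_left_mono) auto
      then show ?thesis using True xe unfolding Bd_def m_def by (simp add: mult.assoc)
    next
      case False
      then have eq: "a * dg p = j" using le by simp
      have "(\<Sum>M'\<in>A (j - a * dg p). f (M' + replicate_mset a p)) = f (replicate_mset a p)"
        using eq A0 by simp
      then show ?thesis
      proof (cases "a = 1")
        case True
        then show ?thesis using \<open>(\<Sum>M'\<in>A (j - a * dg p). f (M' + replicate_mset a p)) = f (replicate_mset a p)\<close>
          eq xe unfolding Bd_def by (simp add: f_def)
      next
        case False
        have "f (replicate_mset a p) \<le> z ^ a" using z by (simp add: f_def)
        then show ?thesis using \<open>(\<Sum>M'\<in>A (j - a * dg p). f (M' + replicate_mset a p)) = f (replicate_mset a p)\<close>
          eq xe False unfolding Bd_def by (simp add: mult_left_mono)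
      qed
    qed
  qed
  have step1: "real j * (\<Sum>M\<in>{M\<in>A j. val M = t}. z ^ size M) \<le> (\<Sum>x\<in>Pairs j. Bd x)"
  proof -
    have "real j * (\<Sum>M\<in>{M\<in>A j. val M = t}. z ^ size M)
       = (\<Sum>x\<in>Pairs j. real (dg (fst x)) * (\<Sum>M'\<in>A (j - snd x * dg (fst x)). f (M' + replicate_mset (snd x) (fst x))))"
      using decomp[of j f] Gf by (simp add: case_prod_beta)
    also have "\<dots> \<le> (\<Sum>x\<in>Pairs j. Bd x)" using termle by (intro sum_mono) auto
    finally show ?thesis .
  qed
  define L where "L = {x\<in>Pairs j. snd x * dg (fst x) < j}"
  define E1 where "E1 = {x\<in>Pairs j. snd x * dg (fst x) = j \<and> snd x = 1}"
  define E2 where "E2 = {x\<in>Pairs j. snd x * dg (fst x) = j \<and> 2 \<le> snd x}"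
  have finP: "finite (Pairs j)" by (rule finPairs)
  have finL: "finite L" and finE1: "finite E1" and finE2: "finite E2"
    using finP by (auto simp: L_def E1_def E2_def)
  have PS: "Pairs j = L \<union> (E1 \<union> E2)"
    by (auto simp: L_def E1_def E2_def Pairs_def)
  have D1: "L \<inter> (E1 \<union> E2) = {}" "E1 \<inter> E2 = {}" by (auto simp: L_def E1_def E2_def)
  have sumsplit: "(\<Sum>x\<in>Pairs j. Bd x) = (\<Sum>x\<in>L. Bd x) + (\<Sum>x\<in>E1. Bd x) + (\<Sum>x\<in>E2. Bd x)"
    unfolding PS using finL finE1 finE2 D1 by (simp add: sum.union_disjoint)
  have "(\<Sum>x\<in>E2. Bd x) = (\<Sum>x\<in>E2. real (dg (fst x)) * z ^ snd x)"
    by (intro sum.cong) (auto simp: E2_def Bd_def)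
  also have "\<dots> \<le> 2 * real q ^ (j - 1) * eps j"
    using Wbound(2)[OF z jpos] unfolding E2_def eps_def by simp
  finally have B2: "(\<Sum>x\<in>E2. Bd x) \<le> 2 * real q ^ (j - 1) * eps j" .
  define E1' where "E1' = {x\<in>E1. val {#fst x#} = t}"
  have "(\<Sum>x\<in>E1. Bd x) = (\<Sum>x\<in>E1. if val {#fst x#} = t then real j * z else 0)"
    by (intro sum.cong) (auto simp: E1_def Bd_def)
  also have "\<dots> = real (card E1') * (real j * z)"
    unfolding E1'_def using finE1 by (simp add: sum.inter_filter[symmetric])
  also have "\<dots> \<le> real q ^ (j - 1) * (real j * z)"
  proof -
    have "card E1' \<le> card {M. set_mset M \<subseteq> Pr \<and> degM dg M = j \<and> val M = t}"
    proof (rule card_inj_on_le[where f = "\<lambda>x. {#fst x#}"])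
      show "inj_on (\<lambda>x. {#fst x#}) E1'" by (auto simp: inj_on_def E1'_def E1_def)
      show "(\<lambda>x. {#fst x#}) ` E1' \<subseteq> {M. set_mset M \<subseteq> Pr \<and> degM dg M = j \<and> val M = t}"
        by (auto simp: E1'_def E1_def Pairs_def)
      show "finite {M. set_mset M \<subseteq> Pr \<and> degM dg M = j \<and> val M = t}"
        using finA[of j] by (rule finite_subset[rotated]) (auto simp: A_def)
    qed
    also have "\<dots> \<le> q ^ (j - 1)" using cnt[OF jpos tT] .
    finally have "real (card E1') \<le> real q ^ (j - 1)" by (metis of_nat_le_iff of_nat_power)
    then show ?thesis using z by (intro mult_right_mono) auto
  qed
  finally have B1: "(\<Sum>x\<in>E1. Bd x) \<le> real q ^ (j - 1) * (real j * z)" .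
  let ?g = "\<lambda>x. snd x * dg (fst x)"
  have "(\<Sum>x\<in>L. Bd x) = (\<Sum>i\<in>{1..<j}. \<Sum>x\<in>{x. x \<in> L \<and> ?g x = i}. Bd x)"
  proof (rule sum.group[symmetric, OF finL])
    show "finite {1..<j}" by simp
    show "?g ` L \<subseteq> {1..<j}"
    proof
      fix y assume "y \<in> ?g ` L"
      then obtain p a where pa: "(p,a) \<in> L" "y = a * dg p" by auto
      then have "1 \<le> a" "1 \<le> dg p" "a * dg p < j" using dg_pos by (auto simp: L_def Pairs_def)
      then show "y \<in> {1..<j}" using pa by (simp add: Suc_le_eq)
    qed
  qed
  also have "\<dots> \<le> (\<Sum>i\<in>{1..<j}. real q ^ (j - 1) * (beta C K (j - i) * (z + eps i)))"
  proof (rule sum_mono)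
    fix i assume i: "i \<in> {1..<j}"
    have setEq: "{x. x \<in> L \<and> ?g x = i} = {x\<in>Pairs i. snd x * dg (fst x) = i}"
      using i by (auto simp: L_def Pairs_def)
    have "(\<Sum>x\<in>{x. x \<in> L \<and> ?g x = i}. Bd x)
        = (\<Sum>x\<in>{x\<in>Pairs i. snd x * dg (fst x) = i}. real (dg (fst x)) * z ^ snd x) *
          (real q ^ (j - i - 1) * beta C K (j - i))"
      unfolding setEq sum_distrib_right using i by (intro sum.cong) (auto simp: Bd_def)
    also have "\<dots> \<le> (z * real q ^ i + 2 * real q ^ (i - 1) * eps i) * (real q ^ (j - i - 1) * beta C K (j - i))"
      using Wbound(1)[OF z, of i] i beta_nonneg[OF C0 K0] unfolding eps_def
      by (intro mult_right_mono) auto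
    also have "\<dots> = z * (real q ^ i * real q ^ (j - i - 1)) * beta C K (j - i)
        + 2 * (real q ^ (i - 1) * real q ^ (j - i - 1)) * eps i * beta C K (j - i)"
      by (simp add: algebra_simps)
    also have "\<dots> \<le> z * real q ^ (j - 1) * beta C K (j - i) + real q ^ (j - 1) * eps i * beta C K (j - i)"
    proof -
      have e1: "real q ^ i * real q ^ (j - i - 1) = real q ^ (j - 1)"
        using i by (simp add: power_add[symmetric])
      have "2 * (real q ^ (i - 1) * real q ^ (j - i - 1)) = 2 * real q ^ (j - 2)"
        using i by (simp add: power_add[symmetric])
      also have "\<dots> \<le> real q * real q ^ (j - 2)" using q2 by (intro mult_right_mono) auto
      also have "\<dots> = real q ^ (j - 1)"
      proof -
        have "j - 1 = Suc (j - 2)" using i by auto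
        then show ?thesis by simp
      qed
      finally have e2: "2 * (real q ^ (i - 1) * real q ^ (j - i - 1)) \<le> real q ^ (j - 1)" .
      have "2 * (real q ^ (i - 1) * real q ^ (j - i - 1)) * (eps i * beta C K (j - i))
          \<le> real q ^ (j - 1) * (eps i * beta C K (j - i))"
        using e2 eps_nn beta_nonneg[OF C0 K0] by (intro mult_right_mono) auto
      then show ?thesis using e1 by (simp add: algebra_simps)
    qed
    also have "\<dots> = real q ^ (j - 1) * (beta C K (j - i) * (z + eps i))" by (simp add: algebra_simps)
    finally show "(\<Sum>x\<in>{x. x \<in> L \<and> ?g x = i}. Bd x) \<le> real q ^ (j - 1) * (beta C K (j - i) * (z + eps i))" .
  qed
  also have "\<dots> = real q ^ (j - 1) * (z * (\<Sum>i\<in>{1..<j}. beta C K (j - i)) + (\<Sum>i\<in>{1..<j}. eps i * beta C K (j - i)))"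
    by (simp add: sum_distrib_left sum.distrib algebra_simps)
  also have "\<dots> \<le> real q ^ (j - 1) * (z * Sb C K (j - 1) + E * Sb C K (j - 1))"
  proof -
    have r: "(\<Sum>i\<in>{1..<j}. beta C K (j - i)) = Sb C K (j - 1)"
    proof -
      have "{1..<j} = {1..j-1}" using jpos by auto
      then have "(\<Sum>i\<in>{1..<j}. beta C K (j - i)) = (\<Sum>i\<in>{1..j-1}. beta C K (j - i))" by simp
      also have "\<dots> = (\<Sum>i\<in>{1..j-1}. beta C K ((j - 1) + 1 - i))"
        by (intro sum.cong) auto
      also have "\<dots> = (\<Sum>i\<in>{1..j-1}. beta C K i)"
        by (rule sum.atLeastAtMost_rev[symmetric])
      finally show ?thesis by (simp add: Sb_sum)
    qed
    have "(\<Sum>i\<in>{1..<j}. eps i * beta C K (j - i)) \<le> (\<Sum>i\<in>{1..<j}. eps i * Sb C K (j - 1))"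
      using eps_nn by (intro sum_mono mult_left_mono beta_le_Sb[OF C0 K0]) auto
    also have "\<dots> = (\<Sum>i\<in>{1..j-1}. eps i) * Sb C K (j - 1)"
    proof -
      have "{1..<j} = {1..j-1}" using jpos by auto
      then show ?thesis by (simp add: sum_distrib_right)
    qed
    also have "\<dots> \<le> E * Sb C K (j - 1)"
      using hE[of "j-1"] Sb_nonneg[OF C0 K0] unfolding eps_def by (intro mult_right_mono) auto
    finally show ?thesis using r z by (intro mult_left_mono) auto
  qed
  finally have BL: "(\<Sum>x\<in>L. Bd x) \<le> real q ^ (j - 1) * (z * Sb C K (j - 1) + E * Sb C K (j - 1))" .
  have "real j * (\<Sum>M\<in>{M\<in>A j. val M = t}. z ^ size M)
      \<le> real q ^ (j - 1) * (K * Sb C K (j - 1) + (real j * z + 2 * eps j))"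
  proof -
    have "real q ^ (j - 1) * (K * Sb C K (j - 1) + (real j * z + 2 * eps j))
       = real q ^ (j - 1) * (z * Sb C K (j - 1) + E * Sb C K (j - 1)) + real q ^ (j - 1) * (real j * z)
         + 2 * real q ^ (j - 1) * eps j"
      unfolding K_def by (simp add: algebra_simps)
    then show ?thesis using step1 sumsplit BL B1 B2 by linarith
  qed
  also have "\<dots> \<le> real q ^ (j - 1) * (K * Sb C K (j - 1) + real j * C)"
  proof -
    have "2 * eps j \<le> 2 * E" using eps_le[OF jpos] by simp
    also have "\<dots> \<le> real j * (2 * E)"
    proof -
      have "1 \<le> real j" using jpos by simp
      then have "1 * (2 * E) \<le> real j * (2 * E)" using E0 by (intro mult_right_mono) auto
      then show ?thesis by simp
    qed
    finally show ?thesis unfolding C_def by (intro mult_left_mono) (auto simp: algebra_simps)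
  qed
  also have "\<dots> = real j * (real q ^ (j - 1) * beta C K j)"
    using jpos by (simp add: beta_def field_simps)
  finally show ?case using jpos unfolding C_def K_def by simp
qed

lemma chernoff:
  assumes z: "1 < z" and E0: "0 \<le> E"
    and hE: "\<And>J. (\<Sum>i\<in>{1..J}. real i * (z / sqrt 2) ^ i) \<le> E"
    and n: "1 \<le> n" and tT: "t \<in> T"
  shows "real (card {M\<in>A n. val M = t \<and> Xc < real (size M)})
     \<le> z powr (-Xc) * (real q ^ (n - 1) * beta (z + 2 * E) (z + E) n)"
proof -
  define S where "S = {M\<in>A n. val M = t \<and> Xc < real (size M)}"
  have finS: "finite S" using finA[of n] by (auto simp: S_def)
  have "real (card S) = (\<Sum>M\<in>S. 1)" by simp
  also have "\<dots> \<le> (\<Sum>M\<in>S. z powr (-Xc) * z ^ size M)"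
  proof (rule sum_mono)
    fix M assume "M \<in> S"
    then have "Xc < real (size M)" by (auto simp: S_def)
    then have "z powr Xc \<le> z powr real (size M)" using z by (intro powr_mono) auto
    also have "\<dots> = z ^ size M" using z by (simp add: powr_realpow)
    finally have "z powr Xc \<le> z ^ size M" .
    moreover have "z powr (-Xc) * z powr Xc = 1" using z by (simp add: powr_add[symmetric])
    ultimately show "1 \<le> z powr (-Xc) * z ^ size M"
      by (metis mult_left_mono powr_ge_zero)
  qed
  also have "\<dots> = z powr (-Xc) * (\<Sum>M\<in>S. z ^ size M)" by (simp add: sum_distrib_left)
  also have "\<dots> \<le> z powr (-Xc) * (\<Sum>M\<in>{M\<in>A n. val M = t}. z ^ size M)"
    using z finA[of n] by (intro mult_left_mono sum_mono2) (auto simp: S_def)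
  also have "\<dots> \<le> z powr (-Xc) * (real q ^ (n - 1) * beta (z + 2 * E) (z + E) n)"
    using main_bound[OF _ E0 hE n tT] z by (intro mult_left_mono) auto
  finally show ?thesis unfolding S_def .
qed

end

lemma pow_bernoulli: "(0::real) \<le> x \<Longrightarrow> 1 \<le> m \<Longrightarrow> x ^ m + real m * x ^ (m - 1) \<le> (x + 1) ^ m"
proof (induction m)
  case 0 then show ?case by simp
next
  case (Suc m)
  show ?case
  proof (cases "m = 0")
    case True then show ?thesis by simp
  next
    case False
    then have IH: "x ^ m + real m * x ^ (m - 1) \<le> (x + 1) ^ m" using Suc by auto
    have xm: "x ^ m = x * x ^ (m - 1)" using False by (metis Suc_pred' not_gr0 power_Suc)
    have "x ^ Suc m + real (Suc m) * x ^ (Suc m - 1) \<le> (x + 1) * (x ^ m + real m * x ^ (m - 1))"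
      using Suc.prems xm by (simp add: algebra_simps)
    also have "\<dots> \<le> (x + 1) * (x + 1) ^ m" using IH Suc.prems by (intro mult_left_mono) auto
    finally show ?thesis by simp
  qed
qed

lemma Sb_bound:
  assumes C: "0 \<le> C" and K: "0 \<le> K" "K \<le> real m - 1" and m: "1 \<le> m"
  shows "Sb C K j \<le> C * real j ^ m"
proof (induction j)
  case 0 then show ?case using m by (cases m) auto
next
  case (Suc j)
  have Sn: "0 \<le> Sb C K j" using Sb_nonneg[OF C K(1)] .
  have "Sb C K (Suc j) = Sb C K j + C + K * Sb C K j / real (Suc j)" by simp
  also have "\<dots> \<le> C * real j ^ m + C + K * (C * real j ^ m) / real (Suc j)"
    using Suc K C by (intro add_mono divide_right_mono mult_left_mono) auto
  also have "\<dots> \<le> C * real (Suc j) ^ m"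
  proof (cases "j = 0")
    case True then show ?thesis using m C by (cases m) auto
  next
    case False
    have j1: "1 \<le> real j" using False by simp
    have "real j ^ m / real (Suc j) \<le> real j ^ (m - 1)"
    proof -
      have "real j ^ m = real j * real j ^ (m - 1)" using m by (metis Suc_diff_le diff_Suc_1 power_Suc)
      also have "\<dots> \<le> real (Suc j) * real j ^ (m - 1)" by (intro mult_right_mono) auto
      finally show ?thesis by (simp add: divide_le_eq mult.commute)
    qed
    then have "K * (C * real j ^ m) / real (Suc j) \<le> (real m - 1) * (C * real j ^ (m - 1))"
    proof -
      have "K * (C * real j ^ m) / real (Suc j) = K * C * (real j ^ m / real (Suc j))" by simp
      also have "\<dots> \<le> (real m - 1) * C * real j ^ (m - 1)"
        using \<open>real j ^ m / real (Suc j) \<le> real j ^ (m - 1)\<close> K C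
        by (intro mult_mono) auto
      finally show ?thesis by simp
    qed
    moreover have "1 \<le> real j ^ (m - 1)" using j1 by simp
    moreover have "real j ^ m + real m * real j ^ (m - 1) \<le> (real j + 1) ^ m"
      using pow_bernoulli[of "real j" m] m by simp
    ultimately have "C * real j ^ m + C + K * (C * real j ^ m) / real (Suc j)
        \<le> C * (real j ^ m + real m * real j ^ (m - 1))"
    proof -
      have c1: "C * 1 \<le> C * real j ^ (m - 1)" using C \<open>1 \<le> real j ^ (m - 1)\<close> by (intro mult_left_mono) auto
      have c2: "C * (real j ^ m + real m * real j ^ (m - 1))
          = C * real j ^ m + C * real j ^ (m - 1) + (real m - 1) * (C * real j ^ (m - 1))"
        by (simp add: algebra_simps)
      show ?thesis using c1 c2 \<open>K * (C * real j ^ m) / real (Suc j) \<le> (real m - 1) * (C * real j ^ (m - 1))\<close>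
        by linarith
    qed
    also have "\<dots> \<le> C * (real j + 1) ^ m" using C pow_bernoulli[of "real j" m] m
      by (intro mult_left_mono) auto
    finally show ?thesis by (simp add: add.commute)
  qed
  finally show ?case .
qed

lemma beta_bound:
  assumes C: "0 \<le> C" and K: "0 \<le> K" "K \<le> real m - 1" and m: "1 \<le> m" and n: "1 \<le> n"
  shows "beta C K n \<le> C * (1 + K) * real n ^ m"
proof -
  have "Sb C K (n - 1) \<le> C * real (n - 1) ^ m" by (rule Sb_bound[OF C K m])
  also have "\<dots> \<le> C * real n ^ m" using C by (intro mult_left_mono power_mono) auto
  finally have S: "Sb C K (n - 1) \<le> C * real n ^ m" .
  have "K * Sb C K (n - 1) / real n \<le> K * Sb C K (n - 1)"
  proof -
    have "0 \<le> K * Sb C K (n - 1)" using K Sb_nonneg[OF C K(1)] by simp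
    then have "K * Sb C K (n - 1) / real n \<le> K * Sb C K (n - 1) / 1"
      using n by (intro divide_left_mono) auto
    then show ?thesis by simp
  qed
  also have "\<dots> \<le> K * (C * real n ^ m)" using S K by (intro mult_left_mono) auto
  finally have "beta C K n \<le> C + K * (C * real n ^ m)" unfolding beta_def by simp
  also have "\<dots> \<le> C * real n ^ m + K * (C * real n ^ m)"
  proof -
    have "1 \<le> real n ^ m" using n by simp
    then have "C * 1 \<le> C * real n ^ m" using C by (intro mult_left_mono) auto
    then show ?thesis by simp
  qed
  also have "\<dots> = C * (1 + K) * real n ^ m" by (simp add: algebra_simps)
  finally show ?thesis .
qed



definition mprod :: "('a, 'b) ring_scheme \<Rightarrow> 'a list multiset \<Rightarrow> 'a list" where
  "mprod R M = foldr (\<otimes>\<^bsub>poly_ring R\<^esub>) (SOME xs. mset xs = M) \<one>\<^bsub>poly_ring R\<^esub>"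

definition MI :: "('a, 'b) ring_scheme \<Rightarrow> 'a list set" where
  "MI R = {p \<in> carrier (poly_ring R). p \<noteq> [] \<and> lead_coeff p = \<one>\<^bsub>R\<^esub> \<and> pirreducible\<^bsub>R\<^esub> (carrier R) p}"

definition monic_polys :: "('a, 'b) ring_scheme \<Rightarrow> nat \<Rightarrow> 'a list set" where
  "monic_polys R j = {P \<in> carrier (poly_ring R). P \<noteq> [] \<and> degree P = j \<and> lead_coeff P = \<one>\<^bsub>R\<^esub>}"

context field
begin

lemma UP_pd: "principal_domain (poly_ring R)"
  by (rule univ_poly_is_principal[OF carrier_is_subfield])

interpretation UP: principal_domain "poly_ring R" by (rule UP_pd)

lemma foldr_closed: "set xs \<subseteq> carrier (poly_ring R) \<Longrightarrow>
    foldr (\<otimes>\<^bsub>poly_ring R\<^esub>) xs \<one>\<^bsub>poly_ring R\<^esub> \<in> carrier (poly_ring R)"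
  by (induction xs) auto

lemma foldr_app_mult: "set xs \<subseteq> carrier (poly_ring R) \<Longrightarrow> set ys \<subseteq> carrier (poly_ring R) \<Longrightarrow>
    foldr (\<otimes>\<^bsub>poly_ring R\<^esub>) (xs @ ys) \<one>\<^bsub>poly_ring R\<^esub>
    = foldr (\<otimes>\<^bsub>poly_ring R\<^esub>) xs \<one>\<^bsub>poly_ring R\<^esub> \<otimes>\<^bsub>poly_ring R\<^esub> foldr (\<otimes>\<^bsub>poly_ring R\<^esub>) ys \<one>\<^bsub>poly_ring R\<^esub>"
  by (induction xs) (auto simp: foldr_closed UP.m_assoc)

lemma mprod_mset: "set xs \<subseteq> carrier (poly_ring R) \<Longrightarrow>
    mprod R (mset xs) = foldr (\<otimes>\<^bsub>poly_ring R\<^esub>) xs \<one>\<^bsub>poly_ring R\<^esub>"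
proof -
  assume xs: "set xs \<subseteq> carrier (poly_ring R)"
  define ys where "ys = (SOME ys. mset ys = mset xs)"
  have "mset ys = mset xs" unfolding ys_def by (rule someI) auto
  then have p: "ys <~~> xs" by simp
  have "set ys \<subseteq> carrier (poly_ring R)" using xs mset_eq_setD[OF \<open>mset ys = mset xs\<close>] by auto
  then have "foldr (\<otimes>\<^bsub>poly_ring R\<^esub>) ys \<one>\<^bsub>poly_ring R\<^esub> = foldr (\<otimes>\<^bsub>poly_ring R\<^esub>) xs \<one>\<^bsub>poly_ring R\<^esub>"
    using UP.multlist_perm_cong[OF p] by blast
  then show ?thesis unfolding mprod_def ys_def by simp
qed

lemma mprod_closed: "set_mset M \<subseteq> carrier (poly_ring R) \<Longrightarrow> mprod R M \<in> carrier (poly_ring R)"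
proof -
  assume M: "set_mset M \<subseteq> carrier (poly_ring R)"
  obtain xs where xs: "mset xs = M" using ex_mset by blast
  then show ?thesis using M mprod_mset[of xs] foldr_closed[of xs] by auto
qed

lemma mprod_empty[simp]: "mprod R {#} = \<one>\<^bsub>poly_ring R\<^esub>"
  using mprod_mset[of "[]"] by simp

lemma mprod_add: "set_mset M \<subseteq> carrier (poly_ring R) \<Longrightarrow> set_mset N \<subseteq> carrier (poly_ring R) \<Longrightarrow>
    mprod R (M + N) = mprod R M \<otimes>\<^bsub>poly_ring R\<^esub> mprod R N"
proof -
  assume M: "set_mset M \<subseteq> carrier (poly_ring R)" and N: "set_mset N \<subseteq> carrier (poly_ring R)"
  obtain xs where xs: "mset xs = M" using ex_mset by blast
  obtain ys where ys: "mset ys = N" using ex_mset by blast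
  have "mprod R (M + N) = mprod R (mset (xs @ ys))" using xs ys by simp
  also have "\<dots> = foldr (\<otimes>\<^bsub>poly_ring R\<^esub>) (xs @ ys) \<one>\<^bsub>poly_ring R\<^esub>"
    using M N xs ys by (intro mprod_mset) auto
  also have "\<dots> = foldr (\<otimes>\<^bsub>poly_ring R\<^esub>) xs \<one>\<^bsub>poly_ring R\<^esub> \<otimes>\<^bsub>poly_ring R\<^esub> foldr (\<otimes>\<^bsub>poly_ring R\<^esub>) ys \<one>\<^bsub>poly_ring R\<^esub>"
    using M N xs ys by (intro foldr_app_mult) auto
  also have "\<dots> = mprod R M \<otimes>\<^bsub>poly_ring R\<^esub> mprod R N"
    using M N xs ys mprod_mset[of xs] mprod_mset[of ys] by auto
  finally show ?thesis .
qed

lemma mprod_single[simp]: "p \<in> carrier (poly_ring R) \<Longrightarrow> mprod R {#p#} = p"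
  using mprod_mset[of "[p]"] by simp

lemma UP_mult_eq: "p \<otimes>\<^bsub>poly_ring R\<^esub> q = poly_mult p q"
  by (simp add: univ_poly_mult)

lemma UP_carrier_iff: "p \<in> carrier (poly_ring R) \<longleftrightarrow> polynomial (carrier R) p"
  by (simp add: univ_poly_carrier)

lemma mult_props:
  assumes p: "p \<in> carrier (poly_ring R)" "p \<noteq> []" and q: "q \<in> carrier (poly_ring R)" "q \<noteq> []"
  shows "p \<otimes>\<^bsub>poly_ring R\<^esub> q \<noteq> []"
    and "degree (p \<otimes>\<^bsub>poly_ring R\<^esub> q) = degree p + degree q"
    and "lead_coeff (p \<otimes>\<^bsub>poly_ring R\<^esub> q) = lead_coeff p \<otimes> lead_coeff q"
proof -
  have pp: "polynomial (carrier R) p" "polynomial (carrier R) q" using p q by (auto simp: UP_carrier_iff)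
  show "p \<otimes>\<^bsub>poly_ring R\<^esub> q \<noteq> []"
    using poly_mult_integral[OF carrier_is_subring pp] p q by (auto simp: UP_mult_eq)
  show "degree (p \<otimes>\<^bsub>poly_ring R\<^esub> q) = degree p + degree q"
    using poly_mult_degree_eq[OF carrier_is_subring pp] p q by (auto simp: UP_mult_eq)
  show "lead_coeff (p \<otimes>\<^bsub>poly_ring R\<^esub> q) = lead_coeff p \<otimes> lead_coeff q"
    using poly_mult_lead_coeff[OF carrier_is_subring pp] p q by (auto simp: UP_mult_eq)
qed

lemma const_term_mult:
  "p \<in> carrier (poly_ring R) \<Longrightarrow> q \<in> carrier (poly_ring R) \<Longrightarrow>
   const_term (p \<otimes>\<^bsub>poly_ring R\<^esub> q) = const_term p \<otimes> const_term q"
  using const_term_simprules_shell(2)[OF carrier_is_subring] by blast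

lemma const_term_closed: "p \<in> carrier (poly_ring R) \<Longrightarrow> const_term p \<in> carrier R"
  using const_term_simprules_shell(1)[OF carrier_is_subring] by blast

lemma UP_one: "\<one>\<^bsub>poly_ring R\<^esub> = [\<one>]" by (simp add: univ_poly_one)

lemma MI_props:
  assumes "p \<in> MI R"
  shows "p \<in> carrier (poly_ring R)" "p \<noteq> []" "lead_coeff p = \<one>"
    "pirreducible (carrier R) p" "1 \<le> degree p"
  using assms pirreducible_degree[OF carrier_is_subfield] by (auto simp: MI_def)

lemma mprod_props_aux:
  "set_mset M \<subseteq> MI R \<Longrightarrow> mprod R M \<in> carrier (poly_ring R) \<and> mprod R M \<noteq> [] \<and>
     lead_coeff (mprod R M) = \<one> \<and> degree (mprod R M) = degM degree M"
proof (induction M)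
  case empty
  have "\<one>\<^bsub>poly_ring R\<^esub> \<in> carrier (poly_ring R)" by simp
  then show ?case by (simp add: UP_one)
next
  case (add x M)
  have "set_mset (add_mset x M) = insert x (set_mset M)" by simp
  then have xM: "set_mset M \<subseteq> MI R" "x \<in> MI R" using add.prems by blast+
  have sub1: "set_mset M \<subseteq> carrier (poly_ring R)" using xM(1) MI_props(1) by blast
  have sub2: "set_mset {#x#} \<subseteq> carrier (poly_ring R)" using MI_props(1)[OF xM(2)] by simp
  note sub = sub1 sub2
  have eq: "mprod R (add_mset x M) = mprod R M \<otimes>\<^bsub>poly_ring R\<^esub> x"
  proof -
    have "mprod R (M + {#x#}) = mprod R M \<otimes>\<^bsub>poly_ring R\<^esub> mprod R {#x#}" by (rule mprod_add[OF sub])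
    then show ?thesis using mprod_single[OF MI_props(1)[OF xM(2)]] by simp
  qed
  note IH = add.IH[OF xM(1)]
  note x = MI_props[OF xM(2)]
  have m1: "mprod R M \<in> carrier (poly_ring R)" "mprod R M \<noteq> []" using IH by auto
  have c: "mprod R M \<otimes>\<^bsub>poly_ring R\<^esub> x \<in> carrier (poly_ring R)" using m1 x(1) by simp
  have n: "mprod R M \<otimes>\<^bsub>poly_ring R\<^esub> x \<noteq> []" using mult_props(1)[OF m1 x(1,2)] .
  have l: "lead_coeff (mprod R M \<otimes>\<^bsub>poly_ring R\<^esub> x) = \<one>"
    using mult_props(3)[OF m1 x(1,2)] IH x(3) by simp
  have d: "degree (mprod R M \<otimes>\<^bsub>poly_ring R\<^esub> x) = degM degree M + degree x"
    using mult_props(2)[OF m1 x(1,2)] IH by simp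
  have "degM degree (add_mset x M) = degM degree M + degree x"
    by (simp add: degM_def)
  then show ?case using eq c n l d by simp
qed

lemma mprod_props:
  assumes "set_mset M \<subseteq> MI R"
  shows "mprod R M \<in> carrier (poly_ring R)" "mprod R M \<noteq> []" "lead_coeff (mprod R M) = \<one>"
    "degree (mprod R M) = degM degree M"
  using mprod_props_aux[OF assms] by auto

lemma UP_zero: "\<zero>\<^bsub>poly_ring R\<^esub> = []" by (simp add: univ_poly_zero)

lemma const_in_UP: "c \<in> carrier R \<Longrightarrow> c \<noteq> \<zero> \<Longrightarrow> [c] \<in> carrier (poly_ring R)"
  by (auto simp: UP_carrier_iff intro: const_is_polynomial)

lemma const_mult_const: "a \<in> carrier R \<Longrightarrow> b \<in> carrier R \<Longrightarrow> a \<otimes> b \<noteq> \<zero> \<Longrightarrow>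
    [a] \<otimes>\<^bsub>poly_ring R\<^esub> [b] = [a \<otimes> b]"
  by (simp add: UP_mult_eq)

lemma units_deg0: "p \<in> Units (poly_ring R) \<longleftrightarrow> p \<in> carrier (poly_ring R) \<and> p \<noteq> [] \<and> degree p = 0"
  by (rule univ_poly_units'[OF carrier_is_subfield])

lemma lead_coeff_nz: "p \<in> carrier (poly_ring R) \<Longrightarrow> p \<noteq> [] \<Longrightarrow> lead_coeff p \<in> carrier R \<and> lead_coeff p \<noteq> \<zero>"
  by (cases p) (auto simp: UP_carrier_iff polynomial_def)

lemma monic_assoc_eq:
  assumes p: "p \<in> carrier (poly_ring R)" "p \<noteq> []" "lead_coeff p = \<one>"
    and q: "q \<in> carrier (poly_ring R)" "q \<noteq> []" "lead_coeff q = \<one>"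
    and a: "p \<sim>\<^bsub>poly_ring R\<^esub> q"
  shows "p = q"
proof -
  obtain k where k: "k \<in> carrier R - {\<zero>}" "p = [k] \<otimes>\<^bsub>poly_ring R\<^esub> q"
    using associated_polynomials_iff[OF carrier_is_subfield p(1) q(1)] a by auto
  have kc: "[k] \<in> carrier (poly_ring R)" using k const_in_UP by auto
  have "lead_coeff p = lead_coeff [k] \<otimes> lead_coeff q"
    using k(2) mult_props(3)[OF kc _ q(1,2)] by simp
  then have "k = \<one>" using p(3) q(3) k(1) by simp
  then show ?thesis using k(2) q(1) by (simp add: UP_one[symmetric])
qed

lemma monic_factor_exists:
  "P \<in> carrier (poly_ring R) \<Longrightarrow> P \<noteq> [] \<Longrightarrow> lead_coeff P = \<one> \<Longrightarrow>
    \<exists>M. set_mset M \<subseteq> MI R \<and> mprod R M = P"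
proof (induction "degree P" arbitrary: P rule: less_induct)
  case less
  show ?case
  proof (cases "degree P = 0")
    case True
    then obtain a where "P = [a]" using less.prems(2) by (cases P) auto
    then have "P = [\<one>]" using less.prems(3) by simp
    then show ?thesis by (intro exI[of _ "{#}"]) (simp add: UP_one)
  next
    case False
    have nU: "P \<notin> Units (poly_ring R)"
    proof
      assume "P \<in> Units (poly_ring R)"
      then have "degree P = 0" using units_deg0[THEN iffD1] by blast
      then show False using False by simp
    qed
    have "P \<noteq> \<zero>\<^bsub>poly_ring R\<^esub>" using less.prems(2) unfolding UP_zero .
    then have Pc: "P \<in> carrier (poly_ring R) - {\<zero>\<^bsub>poly_ring R\<^esub>}" using less.prems(1) by blast
    obtain b where b: "b \<in> carrier (poly_ring R)" "pirreducible (carrier R) b" "b divides\<^bsub>poly_ring R\<^esub> P"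
      using UP.exists_irreducible_divisor[OF Pc nU] by blast
    obtain r where r: "r \<in> carrier (poly_ring R)" "P = b \<otimes>\<^bsub>poly_ring R\<^esub> r"
      using b(3) unfolding factor_def by blast
    have bnz: "b \<noteq> []" using b(2) by (simp add: ring_irreducible_def UP_zero)
    have rnz: "r \<noteq> []"
    proof
      assume "r = []"
      then have "P = b \<otimes>\<^bsub>poly_ring R\<^esub> \<zero>\<^bsub>poly_ring R\<^esub>" using r(2) by (simp add: UP_zero)
      also have "\<dots> = \<zero>\<^bsub>poly_ring R\<^esub>" using UP.r_null[OF b(1)] .
      finally show False using less.prems(2) by (simp add: UP_zero)
    qed
    define c where "c = lead_coeff b"
    have c: "c \<in> carrier R" "c \<noteq> \<zero>" using lead_coeff_nz[OF b(1) bnz] by (auto simp: c_def)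
    have cUn: "c \<in> Units R" using field_Units c by blast
    have ic1: "inv c \<in> carrier R" using cUn by (rule Units_inv_closed)
    have ic3: "inv c \<otimes> c = \<one>" using cUn by (rule Units_l_inv)
    have ic4: "c \<otimes> inv c = \<one>" using cUn by (rule Units_r_inv)
    have ic2: "inv c \<noteq> \<zero>"
    proof
      assume "inv c = \<zero>"
      then have "inv c \<otimes> c = \<zero>" using c(1) by simp
      then show False using ic3 by simp
    qed
    note ic = ic1 ic2 ic3 ic4
    define g where "g = [inv c] \<otimes>\<^bsub>poly_ring R\<^esub> b"
    define Q where "Q = [c] \<otimes>\<^bsub>poly_ring R\<^esub> r"
    have icU: "[inv c] \<in> carrier (poly_ring R)" and cU: "[c] \<in> carrier (poly_ring R)"
      using const_in_UP ic c by auto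
    have gc: "g \<in> carrier (poly_ring R)" and Qc: "Q \<in> carrier (poly_ring R)"
      using icU cU b r by (auto simp: g_def Q_def)
    have gnz: "g \<noteq> []" using mult_props(1)[OF icU _ b(1) bnz] by (simp add: g_def)
    have Qnz: "Q \<noteq> []" using mult_props(1)[OF cU _ r(1) rnz] by (simp add: Q_def)
    have glc: "lead_coeff g = \<one>" using mult_props(3)[OF icU _ b(1) bnz] ic by (simp add: g_def c_def)
    have gdeg: "degree g = degree b" using mult_props(2)[OF icU _ b(1) bnz] by (simp add: g_def)
    have gb: "g \<sim>\<^bsub>poly_ring R\<^esub> b"
      using associated_polynomials_iff[OF carrier_is_subfield gc b(1)] ic by (auto simp: g_def)
    have "irreducible (mult_of (poly_ring R)) b" using UP.ring_irreducibleE(3)[OF b(1) b(2)] .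
    moreover have "b \<sim>\<^bsub>mult_of (poly_ring R)\<^esub> g"
      using UP.assoc_iff_assoc_mult[OF b(1) gc] UP.associated_sym[OF gb] by blast
    ultimately have "irreducible (mult_of (poly_ring R)) g"
      using UP.mult_of.irreducible_cong b(1) bnz gc gnz by (auto simp: UP_zero)
    then have girr: "pirreducible (carrier R) g"
      using UP.ring_irreducibleI'[of g] gc gnz by (simp add: UP_zero)
    have gMI: "g \<in> MI R" unfolding MI_def using gc gnz glc girr by blast
    have "g \<otimes>\<^bsub>poly_ring R\<^esub> Q = ([inv c] \<otimes>\<^bsub>poly_ring R\<^esub> [c]) \<otimes>\<^bsub>poly_ring R\<^esub> (b \<otimes>\<^bsub>poly_ring R\<^esub> r)"
      unfolding g_def Q_def using icU cU b(1) r(1)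
      by (simp add: UP.m_assoc UP.m_lcomm)
    also have "[inv c] \<otimes>\<^bsub>poly_ring R\<^esub> [c] = \<one>\<^bsub>poly_ring R\<^esub>"
      using const_mult_const[of "inv c" c] ic c by (simp add: UP_one)
    finally have PgQ: "P = g \<otimes>\<^bsub>poly_ring R\<^esub> Q" using r b(1) by simp
    have "lead_coeff P = lead_coeff g \<otimes> lead_coeff Q" using PgQ mult_props(3)[OF gc gnz Qc Qnz] by simp
    then have Qlc: "lead_coeff Q = \<one>" using glc less.prems(3) lead_coeff_nz[OF Qc Qnz] by simp
    have "degree P = degree g + degree Q" using PgQ mult_props(2)[OF gc gnz Qc Qnz] by simp
    moreover have "1 \<le> degree g" using gdeg pirreducible_degree[OF carrier_is_subfield b(1) b(2)] by simp
    ultimately have "degree Q < degree P" by simp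
    then obtain M' where M': "set_mset M' \<subseteq> MI R" "mprod R M' = Q"
      using less.hyps[OF _ Qc Qnz Qlc] by blast
    have "mprod R (M' + {#g#}) = mprod R M' \<otimes>\<^bsub>poly_ring R\<^esub> mprod R {#g#}"
    proof (rule mprod_add)
      show "set_mset M' \<subseteq> carrier (poly_ring R)" using M'(1) MI_props(1) by blast
      show "set_mset {#g#} \<subseteq> carrier (poly_ring R)" using gc by simp
    qed
    also have "\<dots> = P" using M'(2) PgQ gc Qc by (simp add: UP.m_comm)
    finally show ?thesis using M'(1) gMI by (intro exI[of _ "M' + {#g#}"]) auto
  qed
qed

lemma irr_facts:
  assumes "x \<in> carrier (poly_ring R)" "pirreducible (carrier R) x"
  shows "x \<noteq> []" "x \<notin> Units (poly_ring R)" "irreducible (mult_of (poly_ring R)) x"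
    "x \<in> carrier (mult_of (poly_ring R))"
proof -
  show "x \<noteq> []" using UP.ring_irreducibleE(1)[OF assms] unfolding UP_zero .
  show "x \<notin> Units (poly_ring R)" using UP.ring_irreducibleE(4)[OF assms] .
  show "irreducible (mult_of (poly_ring R)) x" using UP.ring_irreducibleE(3)[OF assms] .
  show "x \<in> carrier (mult_of (poly_ring R))"
    using assms(1) UP.ring_irreducibleE(1)[OF assms] by simp
qed

lemma ee_of_foldr:
  assumes xs: "set xs \<subseteq> carrier (poly_ring R)" "\<forall>x\<in>set xs. pirreducible (carrier R) x"
    and ys: "set ys \<subseteq> carrier (poly_ring R)" "\<forall>x\<in>set ys. pirreducible (carrier R) x"
    and eq: "foldr (\<otimes>\<^bsub>poly_ring R\<^esub>) xs \<one>\<^bsub>poly_ring R\<^esub> = foldr (\<otimes>\<^bsub>poly_ring R\<^esub>) ys \<one>\<^bsub>poly_ring R\<^esub>"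
  shows "essentially_equal (mult_of (poly_ring R)) xs ys"
proof -
  define a where "a = foldr (\<otimes>\<^bsub>poly_ring R\<^esub>) xs \<one>\<^bsub>poly_ring R\<^esub>"
  have xsm: "set xs \<subseteq> carrier (mult_of (poly_ring R))" using xs irr_facts(4) by blast
  have ysm: "set ys \<subseteq> carrier (mult_of (poly_ring R))" using ys irr_facts(4) by blast
  have ix: "\<forall>x\<in>set xs. irreducible (mult_of (poly_ring R)) x" using xs irr_facts(3) by blast
  have iy: "\<forall>x\<in>set ys. irreducible (mult_of (poly_ring R)) x" using ys irr_facts(3) by blast
  have fx: "factors (mult_of (poly_ring R)) xs a"
    unfolding factors_def a_def using ix by simp
  have fy: "factors (mult_of (poly_ring R)) ys a"
    unfolding factors_def a_def eq using iy by simp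
  have ac: "a \<in> carrier (mult_of (poly_ring R))"
    unfolding a_def using UP.mult_of.multlist_closed[OF xsm] by simp
  have nil_if_unit: "zs = []" if "set zs \<subseteq> carrier (poly_ring R)" "\<forall>x\<in>set zs. pirreducible (carrier R) x"
    "foldr (\<otimes>\<^bsub>poly_ring R\<^esub>) zs \<one>\<^bsub>poly_ring R\<^esub> \<in> Units (poly_ring R)" for zs
  proof (cases zs)
    case (Cons z zs')
    have zc: "z \<in> carrier (poly_ring R)" "pirreducible (carrier R) z" using that Cons by auto
    have rc: "foldr (\<otimes>\<^bsub>poly_ring R\<^esub>) zs' \<one>\<^bsub>poly_ring R\<^esub> \<in> carrier (poly_ring R)"
      using that(1) Cons by (intro foldr_closed) auto
    have "z \<in> Units (poly_ring R)"
      using UP.unit_factor[of z "foldr (\<otimes>\<^bsub>poly_ring R\<^esub>) zs' \<one>\<^bsub>poly_ring R\<^esub>"] that(3) Cons zc(1) rc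
      by simp
    then show ?thesis using irr_facts(2)[OF zc] by blast
  qed simp
  show ?thesis
  proof (cases "a \<in> Units (poly_ring R)")
    case True
    then have "xs = []" "ys = []" using nil_if_unit[OF xs] nil_if_unit[OF ys] eq unfolding a_def by auto
    then show ?thesis by (simp add: essentially_equal_def)
  next
    case False
    then have "a \<notin> Units (mult_of (poly_ring R))" by simp
    then show ?thesis using UP.mult_of.factors_unique[OF fx fy ac _ xsm ysm] by blast
  qed
qed

lemma ee_length: "essentially_equal G xs ys \<Longrightarrow> length xs = length ys"
  unfolding essentially_equal_def by (metis list_all2_lengthD perm_length)

lemma list_all2_eq_on:
  assumes "list_all2 P xs ys" "set xs \<subseteq> A" "set ys \<subseteq> A" "\<And>x y. x \<in> A \<Longrightarrow> y \<in> A \<Longrightarrow> P x y \<Longrightarrow> x = y"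
  shows "xs = ys"
  using assms by (induction rule: list_all2_induct) auto

lemma mprod_inj:
  assumes M: "set_mset M \<subseteq> MI R" and N: "set_mset N \<subseteq> MI R" and eq: "mprod R M = mprod R N"
  shows "M = N"
proof -
  obtain xs where xs: "mset xs = M" using ex_mset by blast
  obtain ys where ys: "mset ys = N" using ex_mset by blast
  have sx: "set xs \<subseteq> MI R" using xs M by auto
  have sy: "set ys \<subseteq> MI R" using ys N by auto
  have cx: "set xs \<subseteq> carrier (poly_ring R)" "\<forall>x\<in>set xs. pirreducible (carrier R) x"
    using sx MI_props(1,4) by blast+
  have cy: "set ys \<subseteq> carrier (poly_ring R)" "\<forall>x\<in>set ys. pirreducible (carrier R) x"
    using sy MI_props(1,4) by blast+
  have "foldr (\<otimes>\<^bsub>poly_ring R\<^esub>) xs \<one>\<^bsub>poly_ring R\<^esub> = foldr (\<otimes>\<^bsub>poly_ring R\<^esub>) ys \<one>\<^bsub>poly_ring R\<^esub>"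
    using eq mprod_mset[OF cx(1)] mprod_mset[OF cy(1)] xs ys by simp
  then have "essentially_equal (mult_of (poly_ring R)) xs ys" using ee_of_foldr[OF cx cy] by blast
  then obtain xs' where xs': "xs <~~> xs'" "list_all2 (\<lambda>a b. a \<sim>\<^bsub>mult_of (poly_ring R)\<^esub> b) xs' ys"
    unfolding essentially_equal_def by blast
  have sx': "set xs' \<subseteq> MI R" using sx mset_eq_setD[OF xs'(1)] by auto
  have "xs' = ys"
  proof (rule list_all2_eq_on[OF xs'(2) sx' sy])
    fix x y assume x: "x \<in> MI R" and y: "y \<in> MI R" and a: "x \<sim>\<^bsub>mult_of (poly_ring R)\<^esub> y"
    have "x \<sim>\<^bsub>poly_ring R\<^esub> y" using UP.assoc_iff_assoc_mult[OF MI_props(1)[OF x] MI_props(1)[OF y]] a by blast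
    then show "x = y" using monic_assoc_eq[OF MI_props(1-3)[OF x] MI_props(1-3)[OF y]] by blast
  qed
  then show ?thesis using xs ys xs'(1) by simp
qed

lemma nif_mprod:
  assumes M: "set_mset M \<subseteq> MI R"
  shows "num_irred_factors R (mprod R M) = size M"
proof -
  obtain xs where xs: "mset xs = M" using ex_mset by blast
  have sx: "set xs \<subseteq> MI R" using xs M by auto
  have cx: "set xs \<subseteq> carrier (poly_ring R)" "\<forall>x\<in>set xs. pirreducible (carrier R) x"
    using sx MI_props(1,4) by blast+
  have fx: "foldr (\<otimes>\<^bsub>poly_ring R\<^esub>) xs \<one>\<^bsub>poly_ring R\<^esub> = mprod R M"
    using mprod_mset[OF cx(1)] xs by simp
  show ?thesis
    unfolding num_irred_factors_def
  proof (rule the_equality)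
    show "\<exists>fs. length fs = size M \<and> set fs \<subseteq> carrier (poly_ring R) \<and>
        (\<forall>f\<in>set fs. pirreducible (carrier R) f) \<and>
        foldr (\<otimes>\<^bsub>poly_ring R\<^esub>) fs \<one>\<^bsub>poly_ring R\<^esub> = mprod R M"
      using cx fx xs by (intro exI[of _ xs]) auto
  next
    fix m assume "\<exists>fs. length fs = m \<and> set fs \<subseteq> carrier (poly_ring R) \<and>
        (\<forall>f\<in>set fs. pirreducible (carrier R) f) \<and>
        foldr (\<otimes>\<^bsub>poly_ring R\<^esub>) fs \<one>\<^bsub>poly_ring R\<^esub> = mprod R M"
    then obtain fs where fs: "length fs = m" "set fs \<subseteq> carrier (poly_ring R)"
      "\<forall>f\<in>set fs. pirreducible (carrier R) f" "foldr (\<otimes>\<^bsub>poly_ring R\<^esub>) fs \<one>\<^bsub>poly_ring R\<^esub> = mprod R M"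
      by blast
    have "essentially_equal (mult_of (poly_ring R)) fs xs"
      using ee_of_foldr[OF fs(2,3) cx] fs(4) fx by simp
    then have "length fs = length xs" by (rule ee_length)
    then show "m = size M" using fs(1) xs by auto
  qed
qed

lemma monic_polys_eq: "monic_polys R j = (\<lambda>xs. \<one> # xs) ` {xs. set xs \<subseteq> carrier R \<and> length xs = j}"
proof
  show "monic_polys R j \<subseteq> (\<lambda>xs. \<one> # xs) ` {xs. set xs \<subseteq> carrier R \<and> length xs = j}"
  proof
    fix P assume P: "P \<in> monic_polys R j"
    then obtain a xs where Pe: "P = a # xs" unfolding monic_polys_def by (cases P) auto
    have "set P \<subseteq> carrier R" using P unfolding monic_polys_def UP_carrier_iff
      using polynomial_incl by blast
    then have "set xs \<subseteq> carrier R" using Pe by auto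
    moreover have "a = \<one>" "length xs = j" using P Pe unfolding monic_polys_def by auto
    ultimately show "P \<in> (\<lambda>xs. \<one> # xs) ` {xs. set xs \<subseteq> carrier R \<and> length xs = j}"
      using Pe by blast
  qed
  show "(\<lambda>xs. \<one> # xs) ` {xs. set xs \<subseteq> carrier R \<and> length xs = j} \<subseteq> monic_polys R j"
  proof
    fix P assume "P \<in> (\<lambda>xs. \<one> # xs) ` {xs. set xs \<subseteq> carrier R \<and> length xs = j}"
    then obtain xs where xs: "P = \<one> # xs" "set xs \<subseteq> carrier R" "length xs = j" by blast
    have "polynomial (carrier R) P" unfolding xs(1) using xs(2) by (intro polynomialI) auto
    then show "P \<in> monic_polys R j" unfolding monic_polys_def UP_carrier_iff using xs by simp
  qed
qed

lemma card_monic: "finite (carrier R) \<Longrightarrow> card (monic_polys R j) = card (carrier R) ^ j"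
  unfolding monic_polys_eq by (subst card_image) (auto simp: inj_on_def card_lists_length_eq)

lemma monic_ct_eq:
  assumes j: "1 \<le> j" and t: "t \<in> carrier R"
  shows "{P \<in> monic_polys R j. const_term P = t} =
    (\<lambda>ys. \<one> # ys @ [t]) ` {ys. set ys \<subseteq> carrier R \<and> length ys = j - 1}"
proof
  show "{P \<in> monic_polys R j. const_term P = t} \<subseteq>
    (\<lambda>ys. \<one> # ys @ [t]) ` {ys. set ys \<subseteq> carrier R \<and> length ys = j - 1}"
  proof
    fix P assume P: "P \<in> {P \<in> monic_polys R j. const_term P = t}"
    then obtain xs where xs: "P = \<one> # xs" "set xs \<subseteq> carrier R" "length xs = j"
      unfolding monic_polys_eq by blast
    then obtain ys x where ysx: "xs = ys @ [x]" using j by (cases xs rule: rev_exhaust) auto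
    have "const_term P = x" unfolding xs(1) ysx using xs(2) ysx const_term_eq_last[of "\<one> # ys" x] by simp
    then have "x = t" using P by simp
    then show "P \<in> (\<lambda>ys. \<one> # ys @ [t]) ` {ys. set ys \<subseteq> carrier R \<and> length ys = j - 1}"
      using xs ysx by auto
  qed
  show "(\<lambda>ys. \<one> # ys @ [t]) ` {ys. set ys \<subseteq> carrier R \<and> length ys = j - 1} \<subseteq>
    {P \<in> monic_polys R j. const_term P = t}"
  proof
    fix P assume "P \<in> (\<lambda>ys. \<one> # ys @ [t]) ` {ys. set ys \<subseteq> carrier R \<and> length ys = j - 1}"
    then obtain ys where ys: "P = \<one> # ys @ [t]" "set ys \<subseteq> carrier R" "length ys = j - 1" by blast
    have "P \<in> monic_polys R j" unfolding monic_polys_eq using ys t j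
      by (intro image_eqI[of _ _ "ys @ [t]"]) auto
    moreover have "const_term P = t" using const_term_eq_last[of "\<one> # ys" t] ys t by simp
    ultimately show "P \<in> {P \<in> monic_polys R j. const_term P = t}" by simp
  qed
qed

lemma card_monic_ct: "finite (carrier R) \<Longrightarrow> 1 \<le> j \<Longrightarrow> t \<in> carrier R \<Longrightarrow>
    card {P \<in> monic_polys R j. const_term P = t} = card (carrier R) ^ (j - 1)"
  unfolding monic_ct_eq by (subst card_image) (auto simp: inj_on_def card_lists_length_eq)

lemma mprod_bij_filter:
  "bij_betw (mprod R) {M. set_mset M \<subseteq> MI R \<and> degM degree M = j \<and> \<Phi> (mprod R M)}
     {P \<in> monic_polys R j. \<Phi> P}"
proof (rule bij_betw_imageI)
  show "inj_on (mprod R) {M. set_mset M \<subseteq> MI R \<and> degM degree M = j \<and> \<Phi> (mprod R M)}"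
    using mprod_inj by (auto simp: inj_on_def)
  show "mprod R ` {M. set_mset M \<subseteq> MI R \<and> degM degree M = j \<and> \<Phi> (mprod R M)} = {P \<in> monic_polys R j. \<Phi> P}"
  proof
    show "mprod R ` {M. set_mset M \<subseteq> MI R \<and> degM degree M = j \<and> \<Phi> (mprod R M)} \<subseteq> {P \<in> monic_polys R j. \<Phi> P}"
    proof
      fix P assume "P \<in> mprod R ` {M. set_mset M \<subseteq> MI R \<and> degM degree M = j \<and> \<Phi> (mprod R M)}"
      then obtain M where M: "P = mprod R M" "set_mset M \<subseteq> MI R" "degM degree M = j" "\<Phi> (mprod R M)" by blast
      show "P \<in> {P \<in> monic_polys R j. \<Phi> P}"
        using mprod_props[OF M(2)] M unfolding monic_polys_def by simp
    qed
    show "{P \<in> monic_polys R j. \<Phi> P} \<subseteq> mprod R ` {M. set_mset M \<subseteq> MI R \<and> degM degree M = j \<and> \<Phi> (mprod R M)}"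
    proof
      fix P assume P: "P \<in> {P \<in> monic_polys R j. \<Phi> P}"
      then have Pm: "P \<in> carrier (poly_ring R)" "P \<noteq> []" "lead_coeff P = \<one>" "degree P = j" "\<Phi> P"
        unfolding monic_polys_def by auto
      obtain M where M: "set_mset M \<subseteq> MI R" "mprod R M = P" using monic_factor_exists[OF Pm(1-3)] by blast
      have "degM degree M = j" using mprod_props(4)[OF M(1)] M(2) Pm(4) by simp
      then show "P \<in> mprod R ` {M. set_mset M \<subseteq> MI R \<and> degM degree M = j \<and> \<Phi> (mprod R M)}"
        using M Pm(5) by blast
    qed
  qed
qed

lemma card_filter:
  "card {M. set_mset M \<subseteq> MI R \<and> degM degree M = j \<and> \<Phi> (mprod R M)} = card {P \<in> monic_polys R j. \<Phi> P}"
  by (rule bij_betw_same_card[OF mprod_bij_filter])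

lemma val_add:
  assumes "set_mset M \<subseteq> MI R" "set_mset N \<subseteq> MI R"
  shows "const_term (mprod R (M + N)) = const_term (mprod R M) \<otimes> const_term (mprod R N)"
proof -
  have c: "set_mset M \<subseteq> carrier (poly_ring R)" "set_mset N \<subseteq> carrier (poly_ring R)"
    using assms MI_props(1) by blast+
  show ?thesis using mprod_add[OF c] const_term_mult[OF mprod_closed[OF c(1)] mprod_closed[OF c(2)]] by simp
qed

lemma fc_interp:
  assumes fin: "finite (carrier R)"
  shows "fc (MI R) (\<lambda>p. degree p) (\<lambda>M. const_term (mprod R M)) (carrier R - {\<zero>}) (card (carrier R))"
proof
  fix p assume "p \<in> MI R" then show "1 \<le> degree p" by (rule MI_props(5))
next
  fix j :: nat
  show "card {M. set_mset M \<subseteq> MI R \<and> degM (\<lambda>p. degree p) M = j} = card (carrier R) ^ j"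
    using card_filter[of j "\<lambda>_. True"] card_monic[OF fin, of j] by simp
next
  fix j :: nat and t assume j: "1 \<le> j" and t: "t \<in> carrier R - {\<zero>}"
  show "card {M. set_mset M \<subseteq> MI R \<and> degM (\<lambda>p. degree p) M = j \<and> const_term (mprod R M) = t}
      \<le> card (carrier R) ^ (j - 1)"
    using card_filter[of j "\<lambda>P. const_term P = t"] card_monic_ct[OF fin j, of t] t by simp
next
  fix p and a :: nat and t assume p: "p \<in> MI R" and a: "1 \<le> a" and t: "t \<in> carrier R - {\<zero>}"
  define v where "v = const_term (mprod R (replicate_mset a p))"
  have repMI: "set_mset (replicate_mset a p) \<subseteq> MI R" using p by (cases a) auto
  have vc: "v \<in> carrier R" unfolding v_def
    using const_term_closed[OF mprod_closed] repMI MI_props(1) by blast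
  have key: "const_term (mprod R (M' + replicate_mset a p)) = const_term (mprod R M') \<otimes> v"
    if "set_mset M' \<subseteq> MI R" for M'
    using val_add[OF that repMI] by (simp add: v_def)
  have valc: "const_term (mprod R M') \<in> carrier R" if "set_mset M' \<subseteq> MI R" for M'
    using const_term_closed[OF mprod_closed] that MI_props(1) by blast
  show "\<exists>s\<in>carrier R - {\<zero>}. \<forall>M'. set_mset M' \<subseteq> MI R \<longrightarrow>
      const_term (mprod R (M' + replicate_mset a p)) = t \<longrightarrow> const_term (mprod R M') = s"
  proof (cases "v = \<zero>")
    case True
    show ?thesis
    proof (rule bexI[of _ t])
      show "t \<in> carrier R - {\<zero>}" by fact
      show "\<forall>M'. set_mset M' \<subseteq> MI R \<longrightarrow> const_term (mprod R (M' + replicate_mset a p)) = t \<longrightarrow>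
          const_term (mprod R M') = t"
      proof (intro allI impI)
        fix M' assume M': "set_mset M' \<subseteq> MI R" and e: "const_term (mprod R (M' + replicate_mset a p)) = t"
        have "t = \<zero>" using e key[OF M'] True valc[OF M'] by simp
        then show "const_term (mprod R M') = t" using t by simp
      qed
    qed
  next
    case False
    have vU: "v \<in> Units R" using vc False field_Units by blast
    have iv: "inv v \<in> carrier R" "v \<otimes> inv v = \<one>" using vU by (simp_all add: Units_r_inv)
    define s where "s = t \<otimes> inv v"
    have sc: "s \<in> carrier R" using t iv unfolding s_def by simp
    have snz: "s \<noteq> \<zero>"
    proof
      assume "s = \<zero>"
      then have "s \<otimes> v = \<zero>" using vc by simp
      moreover have "s \<otimes> v = t" unfolding s_def using t iv vc vU by (simp add: m_assoc Units_l_inv)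
      ultimately show False using t by simp
    qed
    show ?thesis
    proof (rule bexI[of _ s])
      show "s \<in> carrier R - {\<zero>}" using sc snz by simp
      show "\<forall>M'. set_mset M' \<subseteq> MI R \<longrightarrow> const_term (mprod R (M' + replicate_mset a p)) = t \<longrightarrow>
          const_term (mprod R M') = s"
      proof (intro allI impI)
        fix M' assume M': "set_mset M' \<subseteq> MI R" and e: "const_term (mprod R (M' + replicate_mset a p)) = t"
        have "const_term (mprod R M') \<otimes> v = t" using e key[OF M'] by simp
        then have "const_term (mprod R M') \<otimes> v \<otimes> inv v = t \<otimes> inv v" by simp
        then show "const_term (mprod R M') = s" unfolding s_def using valc[OF M'] vc iv by (simp add: m_assoc)
      qed
    qed
  qed
next
  show "2 \<le> card (carrier R)"
  proof -
    have "{\<zero>, \<one>} \<subseteq> carrier R" by simp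
    then have "card {\<zero>, \<one>} \<le> card (carrier R)" using fin by (rule card_mono[rotated])
    then show ?thesis by simp
  qed
qed

end

definition z0 :: real where "z0 = 6 / 5"
definition E0 :: real where "E0 = suminf (\<lambda>i. real i * (z0 / sqrt 2) ^ i)"
definition C0 :: real where "C0 = z0 + 2 * E0"
definition K0 :: real where "K0 = z0 + E0"
definition m0 :: nat where "m0 = nat \<lceil>K0\<rceil> + 1"
definition D0 :: real where "D0 = max 1 (C0 * (1 + K0))"
definition Nf :: "real \<Rightarrow> real" where "Nf k = (k + real m0 + log 2 D0) / ln z0"

lemma r_bounds: "0 \<le> z0 / sqrt 2" "z0 / sqrt 2 \<le> 17 / 20"
proof -
  show "0 \<le> z0 / sqrt 2" by (simp add: z0_def)
  have "(1414 / 1000 :: real) \<le> sqrt 2" by (rule real_le_rsqrt) (simp add: power2_eq_square)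
  then have "z0 / sqrt 2 \<le> z0 / (1414 / 1000)" by (intro divide_left_mono) (auto simp: z0_def)
  also have "\<dots> \<le> 17 / 20" by (simp add: z0_def)
  finally show "z0 / sqrt 2 \<le> 17 / 20" .
qed

lemma summ: "summable (\<lambda>i. real i * (z0 / sqrt 2) ^ i)"
proof (rule summable_ratio_test[where c = "9/10" and N = 20])
  fix n :: nat assume n: "20 \<le> n"
  define r where "r = z0 / sqrt 2"
  have r: "0 \<le> r" "r \<le> 17/20" using r_bounds by (auto simp: r_def)
  have "real (Suc n) * r \<le> real (Suc n) * (17/20)" using r by (intro mult_left_mono) auto
  also have "\<dots> \<le> 9/10 * real n" using n by simp
  finally have a: "real (Suc n) * r \<le> 9/10 * real n" .
  have "norm (real (Suc n) * r ^ Suc n) = (real (Suc n) * r) * r ^ n" using r by (simp add: abs_mult)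
  also have "\<dots> \<le> (9/10 * real n) * r ^ n" using a r by (intro mult_right_mono) auto
  also have "\<dots> = 9/10 * norm (real n * r ^ n)" using r by (simp add: abs_mult)
  finally show "norm (real (Suc n) * (z0 / sqrt 2) ^ Suc n) \<le> 9/10 * norm (real n * (z0 / sqrt 2) ^ n)"
    by (simp add: r_def)
qed simp

lemma E0_nonneg: "0 \<le> E0"
  unfolding E0_def using summ r_bounds by (intro suminf_nonneg) auto

lemma hE0: "(\<Sum>i\<in>{1..J}. real i * (z0 / sqrt 2) ^ i) \<le> E0"
  unfolding E0_def using summ r_bounds by (intro sum_le_suminf) auto

lemma final_arith:
  assumes n: "2 \<le> n" and k: "0 < k" and D: "0 \<le> D" "D \<le> D0" and that: "0 \<le> Q"
  shows "z0 powr (- (Nf k * ln (real n))) * (Q * (D * real n ^ m0)) \<le> real n powr (-k) * Q"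
proof -
  define L where "L = log 2 D0"
  have D01: "1 \<le> D0" by (simp add: D0_def)
  have L0: "0 \<le> L" using D01 by (simp add: L_def)
  have lnz: "0 < ln z0" by (simp add: z0_def)
  have np: "0 < real n" using n by simp
  have "z0 powr (- (Nf k * ln (real n))) = exp (- (Nf k * ln (real n)) * ln z0)"
    by (simp add: powr_def z0_def)
  also have "\<dots> = exp (ln (real n) * (- (k + real m0 + L)))"
    using lnz by (simp add: Nf_def L_def field_simps)
  also have "\<dots> = real n powr (- (k + real m0 + L))" using np by (simp add: powr_def)
  finally have e1: "z0 powr (- (Nf k * ln (real n))) = real n powr (- (k + real m0 + L))" .
  have e2: "real n ^ m0 = real n powr real m0" using np by (simp add: powr_realpow)
  have "real n powr (- (k + real m0 + L)) * real n powr real m0 = real n powr (-k) * real n powr (-L)"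
    using np by (simp add: powr_add[symmetric])
  moreover have "real n powr (-L) \<le> 2 powr (-L)" using L0 n by (intro powr_mono2') auto
  moreover have "2 powr (-L) = 1 / D0" using D01 by (simp add: L_def powr_minus_divide)
  ultimately have "real n powr (- (k + real m0 + L)) * real n powr real m0 \<le> real n powr (-k) * (1 / D0)"
    by (metis mult_left_mono powr_ge_zero)
  then have "D * (real n powr (- (k + real m0 + L)) * real n powr real m0) \<le> D * (real n powr (-k) * (1 / D0))"
    using D by (intro mult_left_mono) auto
  also have "\<dots> \<le> real n powr (-k)"
  proof -
    have "D * (1 / D0) \<le> 1" using D D01 by (simp add: divide_le_eq)
    then have "real n powr (-k) * (D * (1 / D0)) \<le> real n powr (-k) * 1" by (intro mult_left_mono) auto
    then show ?thesis by (simp add: algebra_simps)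
  qed
  finally have "D * (real n powr (- (k + real m0 + L)) * real n powr real m0) \<le> real n powr (-k)" .
  then have "Q * (D * (real n powr (- (k + real m0 + L)) * real n powr real m0)) \<le> Q * real n powr (-k)"
    using that by (intro mult_left_mono) auto
  then show ?thesis unfolding e1 e2 by (simp add: algebra_simps)
qed

context field
begin

lemma field_bound:
  assumes fin: "finite (carrier R)" and n: "2 \<le> n" and k: "0 < k"
  shows "real (card {P \<in> L_set R n. real (num_irred_factors R P) > Nf k * ln (real n)})
    \<le> real n powr (- k) * real (card (L_set R n))"
proof -
  interpret F: fc "MI R" "\<lambda>p. degree p" "\<lambda>M. const_term (mprod R M)" "carrier R - {\<zero>}" "card (carrier R)"
    by (rule fc_interp[OF fin])
  define t0 where "t0 = (\<ominus> \<one>) [^] n"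
  have m1: "\<ominus> \<one> \<in> Units R"
  proof -
    have "\<ominus> \<one> \<in> carrier R" by simp
    moreover have "\<ominus> \<one> \<noteq> \<zero>"
    proof
      assume "\<ominus> \<one> = \<zero>"
      then have "\<ominus> (\<ominus> \<one>) = \<ominus> \<zero>" by simp
      then show False by simp
    qed
    ultimately show ?thesis using field_Units by blast
  qed
  have "t0 \<in> Units R" unfolding t0_def using m1 by (rule Units_pow_closed)
  then have t0T: "t0 \<in> carrier R - {\<zero>}" using field_Units by blast
  have Leq: "L_set R n = {P \<in> monic_polys R n. const_term P = t0}"
    unfolding L_set_def monic_polys_def const_term_def t0_def by blast
  have cardL: "card (L_set R n) = card (carrier R) ^ (n - 1)"
    unfolding Leq using card_monic_ct[OF fin, of n t0] n t0T by simp
  define Xb where "Xb = Nf k * ln (real n)"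
  have Seq: "{P \<in> L_set R n. real (num_irred_factors R P) > Xb}
      = {P \<in> monic_polys R n. const_term P = t0 \<and> Xb < real (num_irred_factors R P)}"
    unfolding Leq by blast
  have "card {P \<in> monic_polys R n. const_term P = t0 \<and> Xb < real (num_irred_factors R P)}
      = card {M. set_mset M \<subseteq> MI R \<and> degM degree M = n \<and>
           (const_term (mprod R M) = t0 \<and> Xb < real (num_irred_factors R (mprod R M)))}"
    by (rule card_filter[symmetric])
  also have "{M. set_mset M \<subseteq> MI R \<and> degM degree M = n \<and>
           (const_term (mprod R M) = t0 \<and> Xb < real (num_irred_factors R (mprod R M)))}
      = {M \<in> F.A n. const_term (mprod R M) = t0 \<and> Xb < real (size M)}"
    unfolding F.A_def using nif_mprod by auto
  finally have cardS: "card {P \<in> L_set R n. real (num_irred_factors R P) > Xb}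
      = card {M \<in> F.A n. const_term (mprod R M) = t0 \<and> Xb < real (size M)}" unfolding Seq .
  have z1: "1 < z0" by (simp add: z0_def)
  have "real (card {M \<in> F.A n. const_term (mprod R M) = t0 \<and> Xb < real (size M)})
      \<le> z0 powr (-Xb) * (real (card (carrier R)) ^ (n - 1) * beta (z0 + 2 * E0) (z0 + E0) n)"
    using F.chernoff[OF z1 E0_nonneg hE0 _ t0T] n by simp
  also have "\<dots> \<le> z0 powr (-Xb) * (real (card (carrier R)) ^ (n - 1) * (C0 * (1 + K0) * real n ^ m0))"
  proof -
    have C: "0 \<le> C0" "0 \<le> K0" using E0_nonneg by (auto simp: C0_def K0_def z0_def)
    have Km: "K0 \<le> real m0 - 1" unfolding m0_def by (simp; linarith)
    have "beta C0 K0 n \<le> C0 * (1 + K0) * real n ^ m0"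
      using beta_bound[OF C Km] n by (simp add: m0_def)
    then show ?thesis unfolding C0_def K0_def by (intro mult_left_mono) auto
  qed
  also have "\<dots> \<le> real n powr (-k) * real (card (carrier R)) ^ (n - 1)"
  proof -
    have C: "0 \<le> C0" "0 \<le> K0" using E0_nonneg by (auto simp: C0_def K0_def z0_def)
    show ?thesis unfolding Xb_def
      by (rule final_arith[OF n k]) (use C in \<open>auto simp: D0_def\<close>)
  qed
  finally show ?thesis using cardS cardL unfolding Xb_def by simp
qed

end


theorem proposition2p4:
  shows "\<forall>k::real. k > 0 \<longrightarrow> (\<exists>N::real. \<forall>n::nat. \<forall>R :: nat ring.
     n \<ge> 2 \<longrightarrow> field R \<longrightarrow> finite (carrier R) \<longrightarrow>
     real (card {P \<in> L_set R n. real (num_irred_factors R P) > N * ln (real n)})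
       \<le> real n powr (- k) * real (card (L_set R n)))"
proof (intro allI impI)
  fix k :: real assume k: "k > 0"
  show "\<exists>N::real. \<forall>n::nat. \<forall>R :: nat ring.
     n \<ge> 2 \<longrightarrow> field R \<longrightarrow> finite (carrier R) \<longrightarrow>
     real (card {P \<in> L_set R n. real (num_irred_factors R P) > N * ln (real n)})
       \<le> real n powr (- k) * real (card (L_set R n))"
  proof (intro exI[of _ "Nf k"] allI impI)
    fix n :: nat and R :: "nat ring"
    assume n: "n \<ge> 2" and F: "field R" and fin: "finite (carrier R)"
    show "real (card {P \<in> L_set R n. real (num_irred_factors R P) > Nf k * ln (real n)})
       \<le> real n powr (- k) * real (card (L_set R n))"
      by (rule field.field_bound[OF F fin n k])
  qed
qed

end
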